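(* There is a unique $\Re$-module homomorphism $\Phi\colon\Re/I_\nu(a,b,c)\to M_\nu(a,b,c)$ sending $1+I_\nu(a,b,c)$ to $m_0$, and $\Phi$ is an isomorphism.
   Context: $\mathbb F$ is algebraically closed with $\operatorname{char}\mathbb F\ne2$. The Racah algebra $\Re$ is the unital associative $\mathbb F$-algebra with generators $A,B,C,D$ and relations $[A,B]=[B,C]=[C,A]=2D$ together with the requirement that each of $\alpha:=[A,D]+AC-BA$, $\beta:=[B,D]+BA-CB$, $\gamma:=[C,D]+CB-AC$ is central in $\Re$; $\delta:=A+B+C$. For $a,b,c,\nu\in\mathbb F$ and $i\in\mathbb Z$: $\theta_i=(a+\tfrac\nu2-i)(a+\tfrac\nu2-i+1)$, $\theta_i^*=(b+\tfrac\nu2-i)(b+\tfrac\nu2-i+1)$, $\varphi_i=i(i-\nu-1)(a+b+c+\tfrac\nu2-i+2)(a+b-c+\tfrac\nu2-i+1)$, $\zeta=(c-b)(c+b+1)(a-\tfrac\nu2)(a+\tfrac\nu2+1)$, $\zeta^*=(a-c)(a+c+1)(b-\tfrac\nu2)(b+\tfrac\nu2+1)$, $\eta=\tfrac\nu2(\tfrac\nu2+1)+a(a+1)+b(b+1)+c(c+1)$. $I_\nu(a,b,c)$ is the left ideal of $\Re$ generated by $B-\theta_0^*$, $(B-\theta_1^* )(A-\theta_0)-\varphi_1$, $\alpha-\zeta$, $\beta-\zeta^*$, $\delta-\eta$. $M_\nu(a,b,c)$ is the $\Re$-module with $\mathbb F$-basis $\{m_i\}_{i\ge0}$ such that $Am_i=\theta_im_i+m_{i+1}$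 ($i\ge0$), $Bm_0=\theta_0^*m_0$, $Bm_i=\theta_i^*m_i+\varphi_im_{i-1}$ ($i\ge1$), and $\alpha,\beta,\delta$ act as $\zeta,\zeta^*,\eta$. *)

theory Defs
  imports "HOL-Library.Function_Algebras" "HOL-Computational_Algebra.Polynomial"
begin

datatype gen = GA | GB | GC | GD

text \<open>Noncommutative polynomials: coefficient functions on words; a word
  [g1,...,gk] stands for the monomial g1 g2 ... gk.  The free algebra consists
  of the finitely supported ones.\<close>
type_synonym 'a ncp = "gen list \<Rightarrow> 'a"

definition ncp_mul :: "'a::comm_ring_1 ncp \<Rightarrow> 'a ncp \<Rightarrow> 'a ncp" where
  "ncp_mul p q = (\<lambda>w. \<Sum>i\<le>length w. p (take i w) * q (drop i w))"

definition ncp_const :: "'a::zero \<Rightarrow> 'a ncp" where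
  "ncp_const c = (\<lambda>w. if w = [] then c else 0)"

definition ncp_gen :: "gen \<Rightarrow> 'a::{zero,one} ncp" where
  "ncp_gen g = (\<lambda>w. if w = [g] then 1 else 0)"

definition free_alg :: "'a::zero ncp set" where
  "free_alg = {p. finite {w. p w \<noteq> 0}}"

definition ncp_comm :: "'a::comm_ring_1 ncp \<Rightarrow> 'a ncp \<Rightarrow> 'a ncp" where
  "ncp_comm p q = ncp_mul p q - ncp_mul q p"

abbreviation rA :: "'a::comm_ring_1 ncp" where "rA \<equiv> ncp_gen GA"
abbreviation rB :: "'a::comm_ring_1 ncp" where "rB \<equiv> ncp_gen GB"
abbreviation rC :: "'a::comm_ring_1 ncp" where "rC \<equiv> ncp_gen GC"
abbreviation rD :: "'a::comm_ring_1 ncp" where "rD \<equiv> ncp_gen GD"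

definition alpha_el :: "'a::comm_ring_1 ncp" where
  "alpha_el = ncp_comm rA rD + ncp_mul rA rC - ncp_mul rB rA"
definition beta_el :: "'a::comm_ring_1 ncp" where
  "beta_el = ncp_comm rB rD + ncp_mul rB rA - ncp_mul rC rB"
definition gamma_el :: "'a::comm_ring_1 ncp" where
  "gamma_el = ncp_comm rC rD + ncp_mul rC rB - ncp_mul rA rC"
definition delta_el :: "'a::comm_ring_1 ncp" where
  "delta_el = rA + rB + rC"

text \<open>Defining relations of the Racah algebra (centrality of alpha, beta, gamma
  expressed as commuting with the four generators).\<close>
definition racah_rels :: "'a::comm_ring_1 ncp set" where
  "racah_rels =
     {ncp_comm rA rB - (rD + rD), ncp_comm rB rC - (rD + rD), ncp_comm rC rA - (rD + rD)}
     \<union> {ncp_comm z X | z X. z \<in> {alpha_el, beta_el, gamma_el} \<and> X \<in> {rA, rB, rC, rD}}"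

inductive_set two_sided_ideal :: "'a::comm_ring_1 ncp set \<Rightarrow> 'a ncp set" for S where
  zero: "0 \<in> two_sided_ideal S"
| gen: "s \<in> S \<Longrightarrow> s \<in> two_sided_ideal S"
| add: "x \<in> two_sided_ideal S \<Longrightarrow> y \<in> two_sided_ideal S \<Longrightarrow> x + y \<in> two_sided_ideal S"
| mul: "x \<in> two_sided_ideal S \<Longrightarrow> p \<in> free_alg \<Longrightarrow> q \<in> free_alg \<Longrightarrow>
        ncp_mul p (ncp_mul x q) \<in> two_sided_ideal S"

inductive_set left_ideal :: "'a::comm_ring_1 ncp set \<Rightarrow> 'a ncp set" for S where
  zero: "0 \<in> left_ideal S"
| gen: "s \<in> S \<Longrightarrow> s \<in> left_ideal S"
| add: "x \<in> left_ideal S \<Longrightarrow> y \<in> left_ideal S \<Longrightarrow> x + y \<in> left_ideal S"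
| mul: "x \<in> left_ideal S \<Longrightarrow> p \<in> free_alg \<Longrightarrow> ncp_mul p x \<in> left_ideal S"

text \<open>The Racah algebra is free_alg / racah_ideal.\<close>
definition racah_ideal :: "'a::comm_ring_1 ncp set" where
  "racah_ideal = two_sided_ideal racah_rels"

definition theta :: "'a::field \<Rightarrow> 'a \<Rightarrow> nat \<Rightarrow> 'a" where
  "theta x nu i = (x + nu/2 - of_nat i) * (x + nu/2 - of_nat i + 1)"
  (* theta_i = theta a nu i,  theta*_i = theta b nu i *)

definition phi :: "'a::field \<Rightarrow> 'a \<Rightarrow> 'a \<Rightarrow> 'a \<Rightarrow> nat \<Rightarrow> 'a" where
  "phi a b c nu i = of_nat i * (of_nat i - nu - 1) * (a + b + c + nu/2 - of_nat i + 2)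
                      * (a + b - c + nu/2 - of_nat i + 1)"

definition zeta :: "'a::field \<Rightarrow> 'a \<Rightarrow> 'a \<Rightarrow> 'a \<Rightarrow> 'a" where
  "zeta a b c nu = (c - b) * (c + b + 1) * (a - nu/2) * (a + nu/2 + 1)"

definition zeta_s :: "'a::field \<Rightarrow> 'a \<Rightarrow> 'a \<Rightarrow> 'a \<Rightarrow> 'a" where
  "zeta_s a b c nu = (a - c) * (a + c + 1) * (b - nu/2) * (b + nu/2 + 1)"

definition eta :: "'a::field \<Rightarrow> 'a \<Rightarrow> 'a \<Rightarrow> 'a \<Rightarrow> 'a" where
  "eta a b c nu = nu/2 * (nu/2 + 1) + a * (a + 1) + b * (b + 1) + c * (c + 1)"

definition I_gens :: "'a::field \<Rightarrow> 'a \<Rightarrow> 'a \<Rightarrow> 'a \<Rightarrow> 'a ncp set" where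
  "I_gens a b c nu =
     {rB - ncp_const (theta b nu 0),
      ncp_mul (rB - ncp_const (theta b nu 1)) (rA - ncp_const (theta a nu 0))
        - ncp_const (phi a b c nu 1),
      alpha_el - ncp_const (zeta a b c nu),
      beta_el - ncp_const (zeta_s a b c nu),
      delta_el - ncp_const (eta a b c nu)}"

text \<open>Preimage in the free algebra of the left ideal I_nu(a,b,c) of the Racah
  algebra: the left ideal generated by the Racah relations ideal and lifts of
  the five generators.\<close>
definition I_lift :: "'a::field \<Rightarrow> 'a \<Rightarrow> 'a \<Rightarrow> 'a \<Rightarrow> 'a ncp set" where
  "I_lift a b c nu = left_ideal (racah_ideal \<union> I_gens a b c nu)"

definition rcoset :: "'a::field \<Rightarrow> 'a \<Rightarrow> 'a \<Rightarrow> 'a \<Rightarrow> 'a ncp \<Rightarrow> 'a ncp set" where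
  "rcoset a b c nu x = {x + k | k. k \<in> I_lift a b c nu}"

text \<open>Carrier of Re / I_nu(a,b,c) (as cosets).\<close>
definition rquot :: "'a::field \<Rightarrow> 'a \<Rightarrow> 'a \<Rightarrow> 'a \<Rightarrow> 'a ncp set set" where
  "rquot a b c nu = rcoset a b c nu ` free_alg"

definition qadd :: "'a::field ncp set \<Rightarrow> 'a ncp set \<Rightarrow> 'a ncp set" where
  "qadd X Y = {x + y | x y. x \<in> X \<and> y \<in> Y}"

definition qact :: "'a::field \<Rightarrow> 'a \<Rightarrow> 'a \<Rightarrow> 'a \<Rightarrow> 'a ncp \<Rightarrow> 'a ncp set \<Rightarrow> 'a ncp set" where
  "qact a b c nu r X = {ncp_mul r x + k | x k. x \<in> X \<and> k \<in> I_lift a b c nu}"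

text \<open>Vectors are coefficient sequences w.r.t. the basis m_0, m_1, ...\<close>
definition Mv :: "(nat \<Rightarrow> 'a::zero) set" where
  "Mv = {v. finite {i. v i \<noteq> 0}}"

definition m0 :: "nat \<Rightarrow> 'a::{zero,one}" where
  "m0 = (\<lambda>i. if i = 0 then 1 else 0)"

definition actA :: "'a::field \<Rightarrow> 'a \<Rightarrow> 'a \<Rightarrow> 'a \<Rightarrow> (nat \<Rightarrow> 'a) \<Rightarrow> nat \<Rightarrow> 'a" where
  "actA a b c nu v = (\<lambda>i. theta a nu i * v i + (if i = 0 then 0 else v (i - 1)))"

definition actB :: "'a::field \<Rightarrow> 'a \<Rightarrow> 'a \<Rightarrow> 'a \<Rightarrow> (nat \<Rightarrow> 'a) \<Rightarrow> nat \<Rightarrow> 'a" where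
  "actB a b c nu v = (\<lambda>i. theta b nu i * v i + phi a b c nu (Suc i) * v (Suc i))"

text \<open>C and D are determined: delta = A+B+C acts as eta, and 2D = [A,B].\<close>
definition actC :: "'a::field \<Rightarrow> 'a \<Rightarrow> 'a \<Rightarrow> 'a \<Rightarrow> (nat \<Rightarrow> 'a) \<Rightarrow> nat \<Rightarrow> 'a" where
  "actC a b c nu v = (\<lambda>i. eta a b c nu * v i - actA a b c nu v i - actB a b c nu v i)"

definition actD :: "'a::field \<Rightarrow> 'a \<Rightarrow> 'a \<Rightarrow> 'a \<Rightarrow> (nat \<Rightarrow> 'a) \<Rightarrow> nat \<Rightarrow> 'a" where
  "actD a b c nu v =
     (\<lambda>i. (actA a b c nu (actB a b c nu v) i - actB a b c nu (actA a b c nu v) i) / 2)"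

fun gen_act :: "'a::field \<Rightarrow> 'a \<Rightarrow> 'a \<Rightarrow> 'a \<Rightarrow> gen \<Rightarrow> (nat \<Rightarrow> 'a) \<Rightarrow> nat \<Rightarrow> 'a" where
  "gen_act a b c nu GA = actA a b c nu"
| "gen_act a b c nu GB = actB a b c nu"
| "gen_act a b c nu GC = actC a b c nu"
| "gen_act a b c nu GD = actD a b c nu"

fun word_act :: "'a::field \<Rightarrow> 'a \<Rightarrow> 'a \<Rightarrow> 'a \<Rightarrow> gen list \<Rightarrow> (nat \<Rightarrow> 'a) \<Rightarrow> nat \<Rightarrow> 'a" where
  "word_act a b c nu [] v = v"
| "word_act a b c nu (g # w) v = gen_act a b c nu g (word_act a b c nu w v)"

definition mact :: "'a::field \<Rightarrow> 'a \<Rightarrow> 'a \<Rightarrow> 'a \<Rightarrow> 'a ncp \<Rightarrow> (nat \<Rightarrow> 'a) \<Rightarrow> nat \<Rightarrow> 'a" where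
  "mact a b c nu r v = (\<lambda>i. \<Sum>w\<in>{w. r w \<noteq> 0}. r w * word_act a b c nu w v i)"

definition racah_hom :: "'a::field \<Rightarrow> 'a \<Rightarrow> 'a \<Rightarrow> 'a \<Rightarrow> ('a ncp set \<Rightarrow> nat \<Rightarrow> 'a) \<Rightarrow> bool" where
  "racah_hom a b c nu \<Phi> \<longleftrightarrow>
     (\<forall>X\<in>rquot a b c nu. \<Phi> X \<in> Mv) \<and>
     (\<forall>X\<in>rquot a b c nu. \<forall>Y\<in>rquot a b c nu. \<Phi> (qadd X Y) = (\<lambda>i. \<Phi> X i + \<Phi> Y i)) \<and>
     (\<forall>r\<in>free_alg. \<forall>X\<in>rquot a b c nu. \<Phi> (qact a b c nu r X) = mact a b c nu r (\<Phi> X))"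

end

theory Submission
  imports Defs
begin


definition ds :: "gen \<Rightarrow> 'a ncp \<Rightarrow> 'a ncp" where "ds g p = (\<lambda>u. p (g # u))"

lemma ncp_mul_Nil: "ncp_mul p q [] = p [] * q []"
  by (simp add: ncp_mul_def)

lemma ncp_mul_Cons: "ncp_mul p q (g # w) = p [] * q (g # w) + ncp_mul (ds g p) q w"
  unfolding ncp_mul_def ds_def by (simp only: length_Cons sum.atMost_Suc_shift) simp

lemma ncp_mul_add_left: "ncp_mul (\<lambda>u. p u + q u) r w = ncp_mul p r w + ncp_mul q r w"
  by (simp add: ncp_mul_def distrib_right sum.distrib)

lemma ncp_mul_add_right: "ncp_mul p (\<lambda>u. q u + r u) w = ncp_mul p q w + ncp_mul p r w"
  by (simp add: ncp_mul_def distrib_left sum.distrib)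

lemma ncp_mul_add_left': "ncp_mul (p + q) r w = ncp_mul p r w + ncp_mul q r w"
  by (simp add: ncp_mul_def distrib_right sum.distrib)

lemma ncp_mul_add_right': "ncp_mul p (q + r) w = ncp_mul p q w + ncp_mul p r w"
  by (simp add: ncp_mul_def distrib_left sum.distrib)

lemma ncp_mul_scal_left: "ncp_mul (\<lambda>u. c * p u) r w = c * ncp_mul p r w"
  by (simp add: ncp_mul_def sum_distrib_left mult.assoc)

lemma ncp_mul_zero_left: "ncp_mul (\<lambda>u. 0) r w = 0"
  by (simp add: ncp_mul_def)

lemma ncp_mul_assoc: "ncp_mul (ncp_mul p q) r w = ncp_mul p (ncp_mul q r) w"
proof (induction w arbitrary: p q r)
  case Nil then show ?case by (simp add: ncp_mul_Nil mult.assoc)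
next
  case (Cons g w)
  have dsm: "ds g (ncp_mul p q) = (\<lambda>u. p [] * ds g q u + ncp_mul (ds g p) q u)"
    by (simp add: ds_def ncp_mul_Cons fun_eq_iff)
  show ?case
    by (simp add: ncp_mul_Cons ncp_mul_Nil dsm ncp_mul_add_left ncp_mul_scal_left Cons.IH algebra_simps)
qed

lemma ncp_mul_const_left: "ncp_mul (ncp_const c) p w = c * p w"
proof (induction w arbitrary: p)
  case Nil then show ?case by (simp add: ncp_mul_Nil ncp_const_def)
next
  case (Cons g w)
  have "ds g (ncp_const c) = (\<lambda>u. 0)" by (simp add: ds_def ncp_const_def fun_eq_iff)
  then show ?case by (simp add: ncp_mul_Cons ncp_const_def ncp_mul_zero_left)
qed

lemma ncp_mul_const_right: "ncp_mul p (ncp_const c) w = p w * c"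
proof (induction w arbitrary: p)
  case Nil then show ?case by (simp add: ncp_mul_Nil ncp_const_def)
next
  case (Cons g w)
  then show ?case by (simp add: ncp_mul_Cons ncp_const_def ds_def)
qed

definition dl :: "gen list \<Rightarrow> 'a::{zero,one} ncp" where "dl u = (\<lambda>w. if w = u then 1 else 0)"

lemma ncp_mul_gen_dl: "ncp_mul (ncp_gen g) (dl u) w = (dl (g # u) w :: 'a::comm_ring_1)"
proof (cases w)
  case Nil then show ?thesis by (simp add: ncp_mul_Nil ncp_gen_def dl_def)
next
  case (Cons g' w')
  have dsg: "ds g' (ncp_gen g) = ncp_const (if g' = g then 1 else 0)"
    by (auto simp add: ds_def ncp_gen_def ncp_const_def fun_eq_iff)
  have h: "ncp_mul (ncp_gen g) (dl u) (g' # w') = (if g' = g then 1 else 0) * dl u w'"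
    by (simp only: ncp_mul_Cons dsg ncp_mul_const_left) (simp add: ncp_gen_def)
  show ?thesis unfolding Cons h by (simp add: dl_def)
qed

lemma free_alg_mul:
  assumes "p \<in> free_alg" "q \<in> free_alg" shows "ncp_mul p q \<in> free_alg"
proof -
  have "{w. ncp_mul p q w \<noteq> 0} \<subseteq> (\<lambda>(u,v). u @ v) ` ({w. p w \<noteq> 0} \<times> {w. q w \<noteq> 0})"
  proof
    fix w assume "w \<in> {w. ncp_mul p q w \<noteq> 0}"
    then have "(\<Sum>i\<le>length w. p (take i w) * q (drop i w)) \<noteq> 0" by (simp add: ncp_mul_def)
    then obtain i where "p (take i w) * q (drop i w) \<noteq> 0"
      by (meson sum.not_neutral_contains_not_neutral)
    then have "p (take i w) \<noteq> 0" "q (drop i w) \<noteq> 0" by auto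
    then show "w \<in> (\<lambda>(u,v). u @ v) ` ({w. p w \<noteq> 0} \<times> {w. q w \<noteq> 0})"
      by (intro image_eqI[of _ _ "(take i w, drop i w)"]) auto
  qed
  moreover have "finite ((\<lambda>(u,v). u @ v) ` ({w. p w \<noteq> 0} \<times> {w. q w \<noteq> 0}))"
    using assms by (simp add: free_alg_def)
  ultimately show ?thesis unfolding free_alg_def by (auto intro: finite_subset)
qed

lemma free_alg_add: fixes p q :: "'a::comm_ring_1 ncp" assumes "p \<in> free_alg" "q \<in> free_alg" shows "p + q \<in> free_alg"
proof -
  have "{w. (p + q) w \<noteq> 0} \<subseteq> {w. p w \<noteq> 0} \<union> {w. q w \<noteq> 0}" by auto
  then show ?thesis using assms unfolding free_alg_def by (auto intro: finite_subset)
qed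

lemma free_alg_uminus: fixes p q :: "'a::comm_ring_1 ncp" assumes "p \<in> free_alg" shows "- p \<in> free_alg"
proof -
  have "{w. (- p) w \<noteq> 0} = {w. p w \<noteq> 0}" by auto
  then show ?thesis using assms unfolding free_alg_def by auto
qed

lemma free_alg_diff: fixes p q :: "'a::comm_ring_1 ncp" assumes "p \<in> free_alg" "q \<in> free_alg" shows "p - q \<in> free_alg"
proof -
  have "{w. (p - q) w \<noteq> 0} \<subseteq> {w. p w \<noteq> 0} \<union> {w. q w \<noteq> 0}" by auto
  then show ?thesis using assms unfolding free_alg_def by (auto intro: finite_subset)
qed

lemma free_alg_const: "(ncp_const c :: 'a::comm_ring_1 ncp) \<in> free_alg"
proof -
  have "{w. ncp_const c w \<noteq> (0::'a)} \<subseteq> {[]}" by (auto simp: ncp_const_def)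
  then show ?thesis unfolding free_alg_def by (auto intro: finite_subset)
qed

lemma free_alg_gen: "(ncp_gen g :: 'a::comm_ring_1 ncp) \<in> free_alg"
proof -
  have "{w. ncp_gen g w \<noteq> (0::'a)} \<subseteq> {[g]}" by (auto simp: ncp_gen_def)
  then show ?thesis unfolding free_alg_def by (auto intro: finite_subset)
qed

lemma free_alg_dl: "(dl u :: 'a::comm_ring_1 ncp) \<in> free_alg"
proof -
  have "{w. dl u w \<noteq> (0::'a)} \<subseteq> {u}" by (auto simp: dl_def)
  then show ?thesis unfolding free_alg_def by (auto intro: finite_subset)
qed

lemma free_alg_zero: "(\<lambda>w. 0) \<in> free_alg"
  unfolding free_alg_def by simp

section \<open>The free algebra as a ring\<close>

typedef (overloaded) 'a fa = "free_alg :: ('a::comm_ring_1) ncp set"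
  using free_alg_zero by blast

setup_lifting type_definition_fa

instantiation fa :: (comm_ring_1) ring_1
begin
lift_definition zero_fa :: "'a fa" is "\<lambda>w. 0" by (rule free_alg_zero)
lift_definition one_fa :: "'a fa" is "ncp_const 1" by (rule free_alg_const)
lift_definition plus_fa :: "'a fa \<Rightarrow> 'a fa \<Rightarrow> 'a fa" is "(+)" by (rule free_alg_add)
lift_definition minus_fa :: "'a fa \<Rightarrow> 'a fa \<Rightarrow> 'a fa" is "(-)" by (rule free_alg_diff)
lift_definition uminus_fa :: "'a fa \<Rightarrow> 'a fa" is "uminus" by (rule free_alg_uminus)
lift_definition times_fa :: "'a fa \<Rightarrow> 'a fa \<Rightarrow> 'a fa" is ncp_mul by (rule free_alg_mul)
instance
proof
  fix x y z :: "'a fa"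
  show "x + y + z = x + (y + z)" by transfer (simp add: add.assoc)
  show "x + y = y + x" by transfer (simp add: add.commute)
  show "0 + x = x" by transfer (simp add: fun_eq_iff)
  show "- x + x = 0" by transfer (simp add: fun_eq_iff)
  show "x - y = x + - y" by transfer simp
  show "x * y * z = x * (y * z)" by transfer (simp add: fun_eq_iff ncp_mul_assoc)
  show "(x + y) * z = x * z + y * z"
    by transfer (simp add: fun_eq_iff ncp_mul_add_left')
  show "x * (y + z) = x * y + x * z"
    by transfer (simp add: fun_eq_iff ncp_mul_add_right')
  show "1 * x = x" by transfer (simp add: fun_eq_iff ncp_mul_const_left)
  show "x * 1 = x" by transfer (simp add: fun_eq_iff ncp_mul_const_right)
  show "(0::'a fa) \<noteq> 1" by transfer (simp add: fun_eq_iff ncp_const_def)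
qed
end

lift_definition fgen :: "gen \<Rightarrow> 'a::comm_ring_1 fa" is ncp_gen by (rule free_alg_gen)
lift_definition sc :: "'a \<Rightarrow> 'a::comm_ring_1 fa" is ncp_const by (rule free_alg_const)
lift_definition fword :: "gen list \<Rightarrow> 'a::comm_ring_1 fa" is dl by (rule free_alg_dl)

lemma Rep_sc_mult: "Rep_fa (sc c * x) = (\<lambda>w. c * Rep_fa x w)"
  by (simp add: times_fa.rep_eq sc.rep_eq fun_eq_iff ncp_mul_const_left)

lemma sc_comm: "sc c * x = x * sc c"
  by transfer (simp add: fun_eq_iff ncp_mul_const_left ncp_mul_const_right mult.commute)

lemma sc_add: "sc (c + d) = sc c + sc d"
  by transfer (simp add: fun_eq_iff ncp_const_def)

lemma sc_mult: "sc (c * d) = sc c * sc d"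
proof -
  have "Rep_fa (sc (c * d)) w = Rep_fa (sc c * sc d) w" for w
    by (simp add: times_fa.rep_eq sc.rep_eq ncp_mul_const_left) (simp add: ncp_const_def)
  then have "Rep_fa (sc (c * d)) = Rep_fa (sc c * sc d)" by (rule ext)
  then show ?thesis by (simp only: Rep_fa_inject)
qed

lemma sc_one: "sc 1 = 1"
  by transfer simp

lemma sc_zero: "sc 0 = 0"
  by transfer (simp add: fun_eq_iff ncp_const_def)

lemma sc_minus: "sc (- c) = - sc c"
  by transfer (simp add: fun_eq_iff ncp_const_def)

lemma sc_diff: "sc (c - d) = sc c - sc d"
  by transfer (simp add: fun_eq_iff ncp_const_def)

lemma sc_mult_assoc_comm: "x * (sc c * y) = sc c * (x * y)"
proof -
  have "x * (sc c * y) = (x * sc c) * y" by (simp only: mult.assoc)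
  also have "x * sc c = sc c * x" by (rule sc_comm[symmetric])
  finally show ?thesis by (simp only: mult.assoc)
qed

lemma fword_Nil: "fword [] = 1"
  by transfer (simp add: fun_eq_iff dl_def ncp_const_def)

lemma fword_Cons: "fword (g # u) = fgen g * fword u"
  by transfer (simp add: fun_eq_iff ncp_mul_gen_dl)

lemma fword_append: "fword (u @ v) = fword u * fword v"
  by (induction u) (simp_all add: fword_Nil fword_Cons mult.assoc)

lemma Rep_fa_sum: "Rep_fa (sum f S) w = (\<Sum>s\<in>S. Rep_fa (f s) w)"
  by (induction S rule: infinite_finite_induct) (simp_all add: zero_fa.rep_eq plus_fa.rep_eq)

definition supp :: "'a::comm_ring_1 fa \<Rightarrow> gen list set" where
  "supp x = {w. Rep_fa x w \<noteq> 0}"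

lemma finite_supp: "finite (supp x)"
  using Rep_fa[of x] by (simp add: supp_def free_alg_def)

lemma fa_repr: "x = (\<Sum>u\<in>supp x. sc (Rep_fa x u) * fword u)"
proof -
  have "Rep_fa (\<Sum>u\<in>supp x. sc (Rep_fa x u) * fword u) w = Rep_fa x w" for w
  proof -
    have "Rep_fa (\<Sum>u\<in>supp x. sc (Rep_fa x u) * fword u) w
        = (\<Sum>u\<in>supp x. Rep_fa x u * (if w = u then 1 else 0))"
      by (simp add: Rep_fa_sum Rep_sc_mult fword.rep_eq dl_def)
    also have "\<dots> = (\<Sum>u\<in>supp x. if w = u then Rep_fa x u else 0)"
      by (intro sum.cong refl) simp
    also have "\<dots> = Rep_fa x w" using finite_supp[of x] by (simp add: supp_def)
    finally show ?thesis .
  qed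
  then have "Rep_fa (\<Sum>u\<in>supp x. sc (Rep_fa x u) * fword u) = Rep_fa x" by (rule ext)
  then have "(\<Sum>u\<in>supp x. sc (Rep_fa x u) * fword u) = x" by (simp only: Rep_fa_inject)
  then show ?thesis by (rule sym)
qed




definition lin :: "((nat \<Rightarrow> 'a::field) \<Rightarrow> nat \<Rightarrow> 'a) \<Rightarrow> bool" where
  "lin T \<longleftrightarrow> (\<forall>u v. T (\<lambda>i. u i + v i) = (\<lambda>i. T u i + T v i)) \<and> (\<forall>c u. T (\<lambda>i. c * u i) = (\<lambda>i. c * T u i))"

lemma lin_add: "lin T \<Longrightarrow> T (\<lambda>i. u i + v i) = (\<lambda>i. T u i + T v i)"
  unfolding lin_def by (elim conjE allE)

lemma lin_scal: "lin T \<Longrightarrow> T (\<lambda>i. c * u i) = (\<lambda>i. c * T u i)"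
  unfolding lin_def by (elim conjE allE)

lemma lin_zero: assumes "lin T" shows "T (\<lambda>i. 0) = (\<lambda>i. 0)"
  using lin_scal[OF assms, of 0 "\<lambda>i. 0"] by simp

lemma lin_sum: "lin T \<Longrightarrow> T (\<lambda>i. \<Sum>s\<in>S. f s i) = (\<lambda>i. \<Sum>s\<in>S. T (f s) i)"
proof (induction S rule: infinite_finite_induct)
  case (infinite S) then show ?case by (simp add: lin_zero)
next
  case empty then show ?case by (simp add: lin_zero)
next
  case (insert x F)
  have "T (\<lambda>i. \<Sum>s\<in>insert x F. f s i) = T (\<lambda>i. f x i + (\<Sum>s\<in>F. f s i))"
    using insert by simp
  also have "\<dots> = (\<lambda>i. T (f x) i + T (\<lambda>i. \<Sum>s\<in>F. f s i) i)"
    using lin_add[OF insert.prems] by (simp only:)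
  also have "\<dots> = (\<lambda>i. \<Sum>s\<in>insert x F. T (f s) i)"
    using insert by simp
  finally show ?case .
qed

lemma lin_scsum: "lin T \<Longrightarrow> T (\<lambda>i. \<Sum>s\<in>S. c s * f s i) = (\<lambda>i. \<Sum>s\<in>S. c s * T (f s) i)"
proof -
  assume l: "lin T"
  have "T (\<lambda>i. \<Sum>s\<in>S. c s * f s i) = (\<lambda>i. \<Sum>s\<in>S. T (\<lambda>j. c s * f s j) i)"
    using lin_sum[OF l, of "\<lambda>s j. c s * f s j" S] by simp
  also have "\<dots> = (\<lambda>i. \<Sum>s\<in>S. c s * T (f s) i)"
    using lin_scal[OF l] by simp
  finally show ?thesis .
qed

lemma lin_comp: "lin S \<Longrightarrow> lin T \<Longrightarrow> lin (\<lambda>v. S (T v))"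
  unfolding lin_def by simp

lemma lin_id: "lin (\<lambda>v. v)"
  unfolding lin_def by simp

lemma lin_actA: "lin (actA a b c nu)"
  unfolding lin_def actA_def by (auto simp: fun_eq_iff algebra_simps)

lemma lin_actB: "lin (actB a b c nu)"
  unfolding lin_def actB_def by (auto simp: fun_eq_iff algebra_simps)

lemma lin_actC: "lin (actC a b c nu)"
proof -
  have A: "lin (actA a b c nu)" and B: "lin (actB a b c nu)" by (rule lin_actA, rule lin_actB)
  show ?thesis unfolding lin_def actC_def
    by (auto simp: fun_eq_iff algebra_simps lin_add[OF A] lin_add[OF B] lin_scal[OF A] lin_scal[OF B])
qed

lemma lin_actD: "lin (actD a b c nu)"
proof -
  have A: "lin (actA a b c nu)" and B: "lin (actB a b c nu)" by (rule lin_actA, rule lin_actB)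
  show ?thesis unfolding lin_def actD_def
    by (auto simp: fun_eq_iff algebra_simps lin_add[OF A] lin_add[OF B] lin_scal[OF A] lin_scal[OF B]
         add_divide_distrib diff_divide_distrib)
qed

lemma lin_gen_act: "lin (gen_act a b c nu g)"
  by (cases g) (simp_all add: lin_actA lin_actB lin_actC lin_actD)

lemma lin_word_act: "lin (word_act a b c nu w)"
  by (induction w) (simp_all add: lin_id lin_comp lin_gen_act)

lemma word_act_append: "word_act a b c nu (u @ w) v = word_act a b c nu u (word_act a b c nu w v)"
  by (induction u) simp_all

section \<open>The action of the free algebra\<close>

definition act :: "'a::field \<Rightarrow> 'a \<Rightarrow> 'a \<Rightarrow> 'a \<Rightarrow> 'a fa \<Rightarrow> (nat \<Rightarrow> 'a) \<Rightarrow> nat \<Rightarrow> 'a" where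
  "act a b c nu x v = mact a b c nu (Rep_fa x) v"

lemma act_eq: "act a b c nu x v = (\<lambda>i. \<Sum>w\<in>supp x. Rep_fa x w * word_act a b c nu w v i)"
  unfolding act_def mact_def supp_def ..

lemma act_superset: "finite F \<Longrightarrow> supp x \<subseteq> F \<Longrightarrow>
   act a b c nu x v = (\<lambda>i. \<Sum>w\<in>F. Rep_fa x w * word_act a b c nu w v i)"
  unfolding act_eq by (rule ext, rule sum.mono_neutral_left) (auto simp: supp_def)

lemma act_add: "act a b c nu (x + y) v = (\<lambda>i. act a b c nu x v i + act a b c nu y v i)"
proof -
  have f: "finite (supp x \<union> supp y)" by (simp add: finite_supp)
  have s: "supp (x + y) \<subseteq> supp x \<union> supp y" by (auto simp: supp_def plus_fa.rep_eq)
  show ?thesis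
    using act_superset[OF f s] act_superset[OF f, of x] act_superset[OF f, of y]
    by (simp add: plus_fa.rep_eq distrib_right sum.distrib)
qed

lemma act_sc: "act a b c nu (sc d * x) v = (\<lambda>i. d * act a b c nu x v i)"
proof -
  have f: "finite (supp x)" by (simp add: finite_supp)
  have s: "supp (sc d * x) \<subseteq> supp x" by (auto simp: supp_def Rep_sc_mult)
  show ?thesis
    using act_superset[OF f s] act_eq[of a b c nu x v]
    by (simp add: Rep_sc_mult sum_distrib_left mult.assoc)
qed

lemma act_zero: "act a b c nu 0 v = (\<lambda>i. 0)"
  by (simp add: act_eq supp_def zero_fa.rep_eq)

lemma act_uminus: "act a b c nu (- x) v = (\<lambda>i. - act a b c nu x v i)"
proof -
  have "- x = sc (-1) * x" by (simp add: sc_minus sc_one)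
  then show ?thesis by (simp add: act_sc)
qed

lemma act_diff: "act a b c nu (x - y) v = (\<lambda>i. act a b c nu x v i - act a b c nu y v i)"
proof -
  have eq: "x - y = x + sc (-1) * y" by (simp add: sc_minus sc_one)
  show ?thesis unfolding eq by (simp add: act_add act_sc)
qed

lemma act_sum: "act a b c nu (sum f S) v = (\<lambda>i. \<Sum>s\<in>S. act a b c nu (f s) v i)"
  by (induction S rule: infinite_finite_induct) (simp_all add: act_zero act_add)

lemma act_fword: "act a b c nu (fword u) v = word_act a b c nu u v"
proof -
  have s: "supp (fword u) \<subseteq> {u}" by (auto simp: supp_def fword.rep_eq dl_def)
  show ?thesis using act_superset[OF _ s] by (simp add: fword.rep_eq dl_def)
qed

lemma act_one: "act a b c nu 1 v = v"
  using act_fword[of a b c nu "[]" v] by (simp add: fword_Nil)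

lemma act_gen: "act a b c nu (fgen g) v = gen_act a b c nu g v"
  using act_fword[of a b c nu "[g]" v] by (simp add: fword_Cons fword_Nil)

lemma act_mult: "act a b c nu (x * y) v = act a b c nu x (act a b c nu y v)"
proof -
  let ?X = "Rep_fa x" and ?Y = "Rep_fa y"
  have "x * y = (\<Sum>u\<in>supp x. sc (?X u) * fword u) * (\<Sum>u'\<in>supp y. sc (?Y u') * fword u')"
    using fa_repr[of x] fa_repr[of y] by simp
  also have "\<dots> = (\<Sum>u\<in>supp x. \<Sum>u'\<in>supp y. sc (?X u * ?Y u') * fword (u @ u'))"
  proof -
    have "sc (?X u) * fword u * (sc (?Y u') * fword u') = sc (?X u * ?Y u') * fword (u @ u')" for u u'
    proof -
      have "sc (?X u) * fword u * (sc (?Y u') * fword u') = sc (?X u) * (sc (?Y u') * (fword u * fword u'))"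
        by (simp only: mult.assoc) (subst sc_mult_assoc_comm[of "fword u"], rule refl)
      also have "\<dots> = sc (?X u * ?Y u') * fword (u @ u')"
        by (simp only: sc_mult fword_append mult.assoc)
      finally show ?thesis .
    qed
    then show ?thesis by (simp add: sum_distrib_left sum_distrib_right) (rule sum.swap)
  qed
  finally have xy: "x * y = (\<Sum>u\<in>supp x. \<Sum>u'\<in>supp y. sc (?X u * ?Y u') * fword (u @ u'))" .
  have "act a b c nu (x * y) v
      = (\<lambda>i. \<Sum>u\<in>supp x. \<Sum>u'\<in>supp y. (?X u * ?Y u') * word_act a b c nu u (word_act a b c nu u' v) i)"
    unfolding xy by (simp add: act_sum act_sc act_fword word_act_append)
  also have "\<dots> = act a b c nu x (act a b c nu y v)"
  proof -
    have "act a b c nu x (act a b c nu y v) =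
       (\<lambda>i. \<Sum>u\<in>supp x. ?X u * word_act a b c nu u (\<lambda>j. \<Sum>u'\<in>supp y. ?Y u' * word_act a b c nu u' v j) i)"
      by (simp add: act_eq[of _ _ _ _ x] act_eq[of _ _ _ _ y])
    also have "\<dots> = (\<lambda>i. \<Sum>u\<in>supp x. ?X u * (\<Sum>u'\<in>supp y. ?Y u' * word_act a b c nu u (word_act a b c nu u' v) i))"
      by (simp add: lin_scsum[OF lin_word_act])
    finally show ?thesis by (simp add: sum_distrib_left mult.assoc)
  qed
  finally show ?thesis .
qed

lemma act_vzero: "act a b c nu x (\<lambda>i. 0) = (\<lambda>i. 0)"
  by (simp add: act_eq lin_zero[OF lin_word_act])

lemma act_vlin: "lin (act a b c nu x)"
  unfolding lin_def act_eq
  by (auto simp: fun_eq_iff lin_add[OF lin_word_act] lin_scal[OF lin_word_act] distrib_left sum.distrib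
       sum_distrib_left algebra_simps)




lemma co_ag_0:
  fixes a b c nu h :: "'a::field"
  assumes two: "(2::'a) \<noteq> 0" and nu: "nu = 2*h"
  shows "- 2 + 1 * theta b nu (Suc (Suc (k))) - 2 * theta b nu (Suc (k)) + 1 * theta b nu (k) = 0"
  using two unfolding nu theta_def phi_def eta_def zeta_def zeta_s_def
  by simp algebra

lemma co_ag_1:
  fixes a b c nu h :: "'a::field"
  assumes two: "(2::'a) \<noteq> 0" and nu: "nu = 2*h"
  shows "- 2 * phi a b c nu (Suc (Suc (k))) + 1 * phi a b c nu (Suc (Suc (Suc (k)))) + 1 * phi a b c nu (Suc (k)) - 2 * theta b nu (Suc (Suc (k))) - 1 * theta b nu (Suc (Suc (k))) * theta a nu (Suc (Suc (k))) + 1 * theta b nu (Suc (Suc (k))) * theta a nu (Suc (k)) - 2 * theta b nu (Suc (k)) + 1 * theta b nu (Suc (k)) * theta a nu (Suc (Suc (k))) - 1 * theta b nu (Suc (k)) * theta a nu (Suc (k)) - 2 * theta a nu (Suc (Suc (k))) - 2 * theta a nu (Suc (k)) + 2 * eta a b c nu = 0"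
  using two unfolding nu theta_def phi_def eta_def zeta_def zeta_s_def
  by simp algebra

lemma co_ag_2:
  fixes a b c nu h :: "'a::field"
  assumes two: "(2::'a) \<noteq> 0" and nu: "nu = 2*h"
  shows "- 2 * phi a b c nu (Suc (Suc (k))) - 1 * phi a b c nu (Suc (Suc (k))) * theta a nu (Suc (Suc (k))) + 1 * phi a b c nu (Suc (Suc (k))) * theta a nu (Suc (k)) - 2 * phi a b c nu (Suc (Suc (Suc (k)))) - 1 * phi a b c nu (Suc (Suc (Suc (k)))) * theta a nu (Suc (Suc (k))) + 1 * phi a b c nu (Suc (Suc (Suc (k)))) * theta a nu (Suc (Suc (Suc (k)))) - 4 * theta b nu (Suc (Suc (k))) * theta a nu (Suc (Suc (k))) + 2 * theta a nu (Suc (Suc (k))) * eta a b c nu - 2 * (theta a nu (Suc (Suc (k))))^2 - 2 * zeta a b c nu = 0"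
  using two unfolding nu theta_def phi_def eta_def zeta_def zeta_s_def
  by simp algebra

lemma co_ag_3:
  fixes a b c nu h :: "'a::field"
  assumes two: "(2::'a) \<noteq> 0" and nu: "nu = 2*h"
  shows "- 2 * phi a b c nu (Suc (Suc (Suc (k)))) * theta a nu (Suc (Suc (k))) - 2 * phi a b c nu (Suc (Suc (Suc (k)))) * theta a nu (Suc (Suc (k))) * theta a nu (Suc (Suc (Suc (k)))) + 1 * phi a b c nu (Suc (Suc (Suc (k)))) * (theta a nu (Suc (Suc (k))))^2 - 2 * phi a b c nu (Suc (Suc (Suc (k)))) * theta a nu (Suc (Suc (Suc (k)))) + 1 * phi a b c nu (Suc (Suc (Suc (k)))) * (theta a nu (Suc (Suc (Suc (k)))))^2 = 0"
  using two unfolding nu theta_def phi_def eta_def zeta_def zeta_s_def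
  by simp algebra

lemma co_a0_2:
  fixes a b c nu h :: "'a::field"
  assumes two: "(2::'a) \<noteq> 0" and nu: "nu = 2*h"
  shows "- 2 * phi a b c nu (Suc 0) - 1 * phi a b c nu (Suc 0) * theta a nu (0) + 1 * phi a b c nu (Suc 0) * theta a nu (Suc 0) - 4 * theta b nu (0) * theta a nu (0) + 2 * theta a nu (0) * eta a b c nu - 2 * (theta a nu (0))^2 - 2 * zeta a b c nu = 0"
  using two unfolding nu theta_def phi_def eta_def zeta_def zeta_s_def
  by simp algebra

lemma co_a0_3:
  fixes a b c nu h :: "'a::field"
  assumes two: "(2::'a) \<noteq> 0" and nu: "nu = 2*h"
  shows "- 2 * phi a b c nu (Suc 0) * theta a nu (0) - 2 * phi a b c nu (Suc 0) * theta a nu (0) * theta a nu (Suc 0) + 1 * phi a b c nu (Suc 0) * (theta a nu (0))^2 - 2 * phi a b c nu (Suc 0) * theta a nu (Suc 0) + 1 * phi a b c nu (Suc 0) * (theta a nu (Suc 0))^2 = 0"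
  using two unfolding nu theta_def phi_def eta_def zeta_def zeta_s_def
  by simp algebra

lemma co_a1_1:
  fixes a b c nu h :: "'a::field"
  assumes two: "(2::'a) \<noteq> 0" and nu: "nu = 2*h"
  shows "- 2 * phi a b c nu (Suc 0) + 1 * phi a b c nu (Suc (Suc 0)) - 2 * theta b nu (Suc 0) - 1 * theta b nu (Suc 0) * theta a nu (Suc 0) + 1 * theta b nu (Suc 0) * theta a nu (0) - 2 * theta b nu (0) + 1 * theta b nu (0) * theta a nu (Suc 0) - 1 * theta b nu (0) * theta a nu (0) - 2 * theta a nu (Suc 0) - 2 * theta a nu (0) + 2 * eta a b c nu = 0"
  using two unfolding nu theta_def phi_def eta_def zeta_def zeta_s_def
  by simp algebra

lemma co_a1_2:
  fixes a b c nu h :: "'a::field"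
  assumes two: "(2::'a) \<noteq> 0" and nu: "nu = 2*h"
  shows "- 2 * phi a b c nu (Suc 0) - 1 * phi a b c nu (Suc 0) * theta a nu (Suc 0) + 1 * phi a b c nu (Suc 0) * theta a nu (0) - 2 * phi a b c nu (Suc (Suc 0)) - 1 * phi a b c nu (Suc (Suc 0)) * theta a nu (Suc 0) + 1 * phi a b c nu (Suc (Suc 0)) * theta a nu (Suc (Suc 0)) - 4 * theta b nu (Suc 0) * theta a nu (Suc 0) + 2 * theta a nu (Suc 0) * eta a b c nu - 2 * (theta a nu (Suc 0))^2 - 2 * zeta a b c nu = 0"
  using two unfolding nu theta_def phi_def eta_def zeta_def zeta_s_def
  by simp algebra

lemma co_a1_3:
  fixes a b c nu h :: "'a::field"
  assumes two: "(2::'a) \<noteq> 0" and nu: "nu = 2*h"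
  shows "- 2 * phi a b c nu (Suc (Suc 0)) * theta a nu (Suc 0) - 2 * phi a b c nu (Suc (Suc 0)) * theta a nu (Suc 0) * theta a nu (Suc (Suc 0)) + 1 * phi a b c nu (Suc (Suc 0)) * (theta a nu (Suc 0))^2 - 2 * phi a b c nu (Suc (Suc 0)) * theta a nu (Suc (Suc 0)) + 1 * phi a b c nu (Suc (Suc 0)) * (theta a nu (Suc (Suc 0)))^2 = 0"
  using two unfolding nu theta_def phi_def eta_def zeta_def zeta_s_def
  by simp algebra

lemma co_bg_1:
  fixes a b c nu h :: "'a::field"
  assumes two: "(2::'a) \<noteq> 0" and nu: "nu = 2*h"
  shows "2 * theta b nu (Suc (k)) + 2 * theta b nu (Suc (k)) * theta b nu (k) - 1 * (theta b nu (Suc (k)))^2 + 2 * theta b nu (k) - 1 * (theta b nu (k))^2 = 0"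
  using two unfolding nu theta_def phi_def eta_def zeta_def zeta_s_def
  by simp algebra

lemma co_bg_2:
  fixes a b c nu h :: "'a::field"
  assumes two: "(2::'a) \<noteq> 0" and nu: "nu = 2*h"
  shows "2 * phi a b c nu (Suc (k)) + 1 * phi a b c nu (Suc (k)) * theta b nu (Suc (k)) - 1 * phi a b c nu (Suc (k)) * theta b nu (k) + 2 * phi a b c nu (Suc (Suc (k))) + 1 * phi a b c nu (Suc (Suc (k))) * theta b nu (Suc (k)) - 1 * phi a b c nu (Suc (Suc (k))) * theta b nu (Suc (Suc (k))) + 4 * theta b nu (Suc (k)) * theta a nu (Suc (k)) - 2 * theta b nu (Suc (k)) * eta a b c nu + 2 * (theta b nu (Suc (k)))^2 - 2 * zeta_s a b c nu = 0"
  using two unfolding nu theta_def phi_def eta_def zeta_def zeta_s_def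
  by simp algebra

lemma co_bg_3:
  fixes a b c nu h :: "'a::field"
  assumes two: "(2::'a) \<noteq> 0" and nu: "nu = 2*h"
  shows "- 1 * phi a b c nu (Suc (k)) * phi a b c nu (Suc (Suc (k))) - 1 * phi a b c nu (Suc (Suc (k))) * phi a b c nu (Suc (Suc (Suc (k)))) + 2 * phi a b c nu (Suc (Suc (k))) * theta b nu (Suc (k)) + 1 * phi a b c nu (Suc (Suc (k))) * theta b nu (Suc (k)) * theta a nu (Suc (k)) - 1 * phi a b c nu (Suc (Suc (k))) * theta b nu (Suc (k)) * theta a nu (Suc (Suc (k))) + 2 * phi a b c nu (Suc (Suc (k))) * theta b nu (Suc (Suc (k))) - 1 * phi a b c nu (Suc (Suc (k))) * theta b nu (Suc (Suc (k))) * theta a nu (Suc (k)) + 1 * phi a b c nu (Suc (Suc (k))) * theta b nu (Suc (Suc (k))) * theta a nu (Suc (Suc (k))) + 2 * phi a b c nu (Suc (Suc (k))) * theta a nu (Suc (k)) + 2 * phi a b c nu (Suc (Suc (k))) * theta a nu (Suc (Suc (k))) - 2 * phi a b c nu (Suc (Suc (k))) * eta a b c nu + 2 * (phi a b c nu (Suc (Suc (k))))^2 = 0"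
  using two unfolding nu theta_def phi_def eta_def zeta_def zeta_s_def
  by simp algebra

lemma co_bg_4:
  fixes a b c nu h :: "'a::field"
  assumes two: "(2::'a) \<noteq> 0" and nu: "nu = 2*h"
  shows "2 * phi a b c nu (Suc (Suc (k))) * phi a b c nu (Suc (Suc (Suc (k)))) - 1 * phi a b c nu (Suc (Suc (k))) * phi a b c nu (Suc (Suc (Suc (k)))) * theta a nu (Suc (k)) + 2 * phi a b c nu (Suc (Suc (k))) * phi a b c nu (Suc (Suc (Suc (k)))) * theta a nu (Suc (Suc (k))) - 1 * phi a b c nu (Suc (Suc (k))) * phi a b c nu (Suc (Suc (Suc (k)))) * theta a nu (Suc (Suc (Suc (k)))) = 0"
  using two unfolding nu theta_def phi_def eta_def zeta_def zeta_s_def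
  by simp algebra

lemma co_b0_2:
  fixes a b c nu h :: "'a::field"
  assumes two: "(2::'a) \<noteq> 0" and nu: "nu = 2*h"
  shows "2 * phi a b c nu (Suc 0) + 1 * phi a b c nu (Suc 0) * theta b nu (0) - 1 * phi a b c nu (Suc 0) * theta b nu (Suc 0) + 4 * theta b nu (0) * theta a nu (0) - 2 * theta b nu (0) * eta a b c nu + 2 * (theta b nu (0))^2 - 2 * zeta_s a b c nu = 0"
  using two unfolding nu theta_def phi_def eta_def zeta_def zeta_s_def
  by simp algebra

lemma co_b0_3:
  fixes a b c nu h :: "'a::field"
  assumes two: "(2::'a) \<noteq> 0" and nu: "nu = 2*h"
  shows "- 1 * phi a b c nu (Suc 0) * phi a b c nu (Suc (Suc 0)) + 2 * phi a b c nu (Suc 0) * theta b nu (0) + 1 * phi a b c nu (Suc 0) * theta b nu (0) * theta a nu (0) - 1 * phi a b c nu (Suc 0) * theta b nu (0) * theta a nu (Suc 0) + 2 * phi a b c nu (Suc 0) * theta b nu (Suc 0) - 1 * phi a b c nu (Suc 0) * theta b nu (Suc 0) * theta a nu (0) + 1 * phi a b c nu (Suc 0) * theta b nu (Suc 0) * theta a nu (Suc 0) + 2 * phi a b c nu (Suc 0) * theta a nu (0) + 2 * phi a b c nu (Suc 0) * theta a nu (Suc 0) - 2 * phi a b c nu (Suc 0) * eta a b c nu + 2 * (phi a b c nu (Suc 0))^2 = 0"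
  using two unfolding nu theta_def phi_def eta_def zeta_def zeta_s_def
  by simp algebra

lemma co_b0_4:
  fixes a b c nu h :: "'a::field"
  assumes two: "(2::'a) \<noteq> 0" and nu: "nu = 2*h"
  shows "2 * phi a b c nu (Suc 0) * phi a b c nu (Suc (Suc 0)) - 1 * phi a b c nu (Suc 0) * phi a b c nu (Suc (Suc 0)) * theta a nu (0) + 2 * phi a b c nu (Suc 0) * phi a b c nu (Suc (Suc 0)) * theta a nu (Suc 0) - 1 * phi a b c nu (Suc 0) * phi a b c nu (Suc (Suc 0)) * theta a nu (Suc (Suc 0)) = 0"
  using two unfolding nu theta_def phi_def eta_def zeta_def zeta_s_def
  by simp algebra

lemma four_ne:
  assumes "(2::'a::field) \<noteq> 0" shows "(4::'a) \<noteq> 0"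
proof -
  have "(4::'a) = 2*2" by simp
  moreover have "(2::'a)*2 \<noteq> 0" using assms by (metis no_zero_divisors)
  ultimately show ?thesis by metis
qed
lemma ex_ag:
  fixes a b c nu :: "'a::field"
  assumes two: "(2::'a) \<noteq> 0"
  shows "2 * (actA a b c nu (actD a b c nu v) (Suc (Suc (k))) - actD a b c nu (actA a b c nu v) (Suc (Suc (k))) + actA a b c nu (actC a b c nu v) (Suc (Suc (k))) - actB a b c nu (actA a b c nu v) (Suc (Suc (k)))) - 2 * (zeta a b c nu * v (Suc (Suc (k)))) = (- 2 + 1 * theta b nu (Suc (Suc (k))) - 2 * theta b nu (Suc (k)) + 1 * theta b nu (k)) * v (k) + (- 2 * phi a b c nu (Suc (Suc (k))) + 1 * phi a b c nu (Suc (Suc (Suc (k)))) + 1 * phi a b c nu (Suc (k)) - 2 * theta b nu (Suc (Suc (k))) - 1 * theta b nu (Suc (Suc (k))) * theta a nu (Suc (Suc (k))) + 1 * theta b nu (Suc (Suc (k))) * theta a nu (Suc (k)) - 2 * theta b nu (Suc (k)) + 1 * theta b nu (Suc (k)) * theta a nu (Suc (Suc (k))) - 1 * theta b nu (Suc (k)) * theta a nu (Suc (k)) - 2 * theta a nu (Suc (Suc (k))) - 2 * theta a nu (Suc (k)) + 2 * eta a b c nu) * v (Suc (k)) + (- 2 * phi a b c nu (Suc (Suc (k))) - 1 * phi a b c nu (Suc (Suc (k))) * theta a nu (Suc (Suc (k))) + 1 * phi a b c nu (Suc (Suc (k))) * theta a nu (Suc (k)) - 2 * phi a b c nu (Suc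 (Suc (Suc (k)))) - 1 * phi a b c nu (Suc (Suc (Suc (k)))) * theta a nu (Suc (Suc (k))) + 1 * phi a b c nu (Suc (Suc (Suc (k)))) * theta a nu (Suc (Suc (Suc (k)))) - 4 * theta b nu (Suc (Suc (k))) * theta a nu (Suc (Suc (k))) + 2 * theta a nu (Suc (Suc (k))) * eta a b c nu - 2 * (theta a nu (Suc (Suc (k))))^2 - 2 * zeta a b c nu) * v (Suc (Suc (k))) + (- 2 * phi a b c nu (Suc (Suc (Suc (k)))) * theta a nu (Suc (Suc (k))) - 2 * phi a b c nu (Suc (Suc (Suc (k)))) * theta a nu (Suc (Suc (k))) * theta a nu (Suc (Suc (Suc (k)))) + 1 * phi a b c nu (Suc (Suc (Suc (k)))) * (theta a nu (Suc (Suc (k))))^2 - 2 * phi a b c nu (Suc (Suc (Suc (k)))) * theta a nu (Suc (Suc (Suc (k)))) + 1 * phi a b c nu (Suc (Suc (Suc (k)))) * (theta a nu (Suc (Suc (Suc (k)))))^2) * v (Suc (Suc (Suc (k))))"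
  using two four_ne[OF two]
  apply (simp add: actA_def actB_def actC_def actD_def)
  apply (simp add: field_simps)
  apply algebra
  done

lemma ex_a0:
  fixes a b c nu :: "'a::field"
  assumes two: "(2::'a) \<noteq> 0"
  shows "2 * (actA a b c nu (actD a b c nu v) (0) - actD a b c nu (actA a b c nu v) (0) + actA a b c nu (actC a b c nu v) (0) - actB a b c nu (actA a b c nu v) (0)) - 2 * (zeta a b c nu * v (0)) = (- 2 * phi a b c nu (Suc 0) - 1 * phi a b c nu (Suc 0) * theta a nu (0) + 1 * phi a b c nu (Suc 0) * theta a nu (Suc 0) - 4 * theta b nu (0) * theta a nu (0) + 2 * theta a nu (0) * eta a b c nu - 2 * (theta a nu (0))^2 - 2 * zeta a b c nu) * v (0) + (- 2 * phi a b c nu (Suc 0) * theta a nu (0) - 2 * phi a b c nu (Suc 0) * theta a nu (0) * theta a nu (Suc 0) + 1 * phi a b c nu (Suc 0) * (theta a nu (0))^2 - 2 * phi a b c nu (Suc 0) * theta a nu (Suc 0) + 1 * phi a b c nu (Suc 0) * (theta a nu (Suc 0))^2) * v (Suc 0)"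
  using two four_ne[OF two]
  apply (simp add: actA_def actB_def actC_def actD_def)
  apply (simp add: field_simps)
  apply algebra
  done

lemma ex_a1:
  fixes a b c nu :: "'a::field"
  assumes two: "(2::'a) \<noteq> 0"
  shows "2 * (actA a b c nu (actD a b c nu v) (Suc 0) - actD a b c nu (actA a b c nu v) (Suc 0) + actA a b c nu (actC a b c nu v) (Suc 0) - actB a b c nu (actA a b c nu v) (Suc 0)) - 2 * (zeta a b c nu * v (Suc 0)) = (- 2 * phi a b c nu (Suc 0) + 1 * phi a b c nu (Suc (Suc 0)) - 2 * theta b nu (Suc 0) - 1 * theta b nu (Suc 0) * theta a nu (Suc 0) + 1 * theta b nu (Suc 0) * theta a nu (0) - 2 * theta b nu (0) + 1 * theta b nu (0) * theta a nu (Suc 0) - 1 * theta b nu (0) * theta a nu (0) - 2 * theta a nu (Suc 0) - 2 * theta a nu (0) + 2 * eta a b c nu) * v (0) + (- 2 * phi a b c nu (Suc 0) - 1 * phi a b c nu (Suc 0) * theta a nu (Suc 0) + 1 * phi a b c nu (Suc 0) * theta a nu (0) - 2 * phi a b c nu (Suc (Suc 0)) - 1 * phi a b c nu (Suc (Suc 0)) * theta a nu (Suc 0) + 1 * phi a b c nu (Suc (Suc 0)) * theta a nu (Suc (Suc 0)) - 4 * theta b nu (Suc 0) * theta a nu (Suc 0) + 2 * theta a nu (Suc 0) * eta a b c nu - 2 * (theta a nu (Suc 0))^2 - 2 * zeta a b c nu) * v (Suc 0) + (- 2 * phi a b c nu (Suc (Suc 0)) * theta a nu (Suc 0) - 2 *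 phi a b c nu (Suc (Suc 0)) * theta a nu (Suc 0) * theta a nu (Suc (Suc 0)) + 1 * phi a b c nu (Suc (Suc 0)) * (theta a nu (Suc 0))^2 - 2 * phi a b c nu (Suc (Suc 0)) * theta a nu (Suc (Suc 0)) + 1 * phi a b c nu (Suc (Suc 0)) * (theta a nu (Suc (Suc 0)))^2) * v (Suc (Suc 0))"
  using two four_ne[OF two]
  apply (simp add: actA_def actB_def actC_def actD_def)
  apply (simp add: field_simps)
  apply algebra
  done

lemma ex_bg:
  fixes a b c nu :: "'a::field"
  assumes two: "(2::'a) \<noteq> 0"
  shows "2 * (actB a b c nu (actD a b c nu v) (Suc (k)) - actD a b c nu (actB a b c nu v) (Suc (k)) + actB a b c nu (actA a b c nu v) (Suc (k)) - actC a b c nu (actB a b c nu v) (Suc (k))) - 2 * (zeta_s a b c nu * v (Suc (k))) = (2 * theta b nu (Suc (k)) + 2 * theta b nu (Suc (k)) * theta b nu (k) - 1 * (theta b nu (Suc (k)))^2 + 2 * theta b nu (k) - 1 * (theta b nu (k))^2) * v (k) + (2 * phi a b c nu (Suc (k)) + 1 * phi a b c nu (Suc (k)) * theta b nu (Suc (k)) - 1 * phi a b c nu (Suc (k)) * theta b nu (k) + 2 * phi a b c nu (Suc (Suc (k))) + 1 * phi a b c nu (Suc (Suc (k))) * theta b nu (Suc (k)) - 1 * phi a b c nu (Suc (Suc (k))) * theta b nu (Suc (Suc (k))) + 4 * theta b nu (Suc (k)) * theta a nu (Suc (k)) - 2 * theta b nu (Suc (k)) * eta a b c nu + 2 * (theta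 b nu (Suc (k)))^2 - 2 * zeta_s a b c nu) * v (Suc (k)) + (- 1 * phi a b c nu (Suc (k)) * phi a b c nu (Suc (Suc (k))) - 1 * phi a b c nu (Suc (Suc (k))) * phi a b c nu (Suc (Suc (Suc (k)))) + 2 * phi a b c nu (Suc (Suc (k))) * theta b nu (Suc (k)) + 1 * phi a b c nu (Suc (Suc (k))) * theta b nu (Suc (k)) * theta a nu (Suc (k)) - 1 * phi a b c nu (Suc (Suc (k))) * theta b nu (Suc (k)) * theta a nu (Suc (Suc (k))) + 2 * phi a b c nu (Suc (Suc (k))) * theta b nu (Suc (Suc (k))) - 1 * phi a b c nu (Suc (Suc (k))) * theta b nu (Suc (Suc (k))) * theta a nu (Suc (k)) + 1 * phi a b c nu (Suc (Suc (k))) * theta b nu (Suc (Suc (k))) * theta a nu (Suc (Suc (k))) + 2 * phi a b c nu (Suc (Suc (k))) * theta a nu (Suc (k)) + 2 * phi a b c nu (Suc (Suc (k))) * theta a nu (Suc (Suc (k))) - 2 * phi a b c nu (Suc (Suc (k))) * eta a b c nu + 2 * (phi a b c nu (Suc (Suc (k))))^2) * v (Suc (Suc (k))) + (2 * phi a b c nu (Suc (Suc (k))) * phi a b c nu (Suc (Suc (Suc (k)))) - 1 * phi a b c nu (Suc (Suc (k))) * phi a b c nu (Suc (Suc (Suc (k)))) * theta a nu (Suc (k)) + 2 * phi a b c nu (Suc (Suc (k))) * phi a b c nu (Suc (Suc (Suc (k)))) * theta a nu (Suc (Suc (k))) - 1 * phi a b c nu (Suc (Suc (k))) * phi a b c nu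 (Suc (Suc (Suc (k)))) * theta a nu (Suc (Suc (Suc (k))))) * v (Suc (Suc (Suc (k))))"
  using two four_ne[OF two]
  apply (simp add: actA_def actB_def actC_def actD_def)
  apply (simp add: field_simps)
  apply algebra
  done

lemma ex_b0:
  fixes a b c nu :: "'a::field"
  assumes two: "(2::'a) \<noteq> 0"
  shows "2 * (actB a b c nu (actD a b c nu v) (0) - actD a b c nu (actB a b c nu v) (0) + actB a b c nu (actA a b c nu v) (0) - actC a b c nu (actB a b c nu v) (0)) - 2 * (zeta_s a b c nu * v (0)) = (2 * phi a b c nu (Suc 0) + 1 * phi a b c nu (Suc 0) * theta b nu (0) - 1 * phi a b c nu (Suc 0) * theta b nu (Suc 0) + 4 * theta b nu (0) * theta a nu (0) - 2 * theta b nu (0) * eta a b c nu + 2 * (theta b nu (0))^2 - 2 * zeta_s a b c nu) * v (0) + (- 1 * phi a b c nu (Suc 0) * phi a b c nu (Suc (Suc 0)) + 2 * phi a b c nu (Suc 0) * theta b nu (0) + 1 * phi a b c nu (Suc 0) * theta b nu (0) * theta a nu (0) - 1 * phi a b c nu (Suc 0) * theta b nu (0) * theta a nu (Suc 0) + 2 * phi a b c nu (Suc 0) * theta b nu (Suc 0) - 1 * phi a b c nu (Suc 0) * theta b nu (Suc 0) * theta a nu (0) + 1 * phi a b c nu (Suc 0) * theta b nu (Suc 0) * theta a nu (Suc 0) + 2 * phi a b c nu (Suc 0) * theta a nu (0) + 2 * phi a b c nu (Suc 0) * theta a nu (Suc 0) - 2 * phi a b c nu (Suc 0) * eta a b c nu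 + 2 * (phi a b c nu (Suc 0))^2) * v (Suc 0) + (2 * phi a b c nu (Suc 0) * phi a b c nu (Suc (Suc 0)) - 1 * phi a b c nu (Suc 0) * phi a b c nu (Suc (Suc 0)) * theta a nu (0) + 2 * phi a b c nu (Suc 0) * phi a b c nu (Suc (Suc 0)) * theta a nu (Suc 0) - 1 * phi a b c nu (Suc 0) * phi a b c nu (Suc (Suc 0)) * theta a nu (Suc (Suc 0))) * v (Suc (Suc 0))"
  using two four_ne[OF two]
  apply (simp add: actA_def actB_def actC_def actD_def)
  apply (simp add: field_simps)
  apply algebra
  done

lemma two_cancel:
  fixes X Y :: "'a::field" assumes "2 * X - 2 * Y = 0" "(2::'a) \<noteq> 0" shows "X = Y"
  using assms by simp

lemma alpha_pt:
  fixes a b c nu :: "'a::field" assumes two: "(2::'a) \<noteq> 0"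
  shows "actA a b c nu (actD a b c nu v) i - actD a b c nu (actA a b c nu v) i + actA a b c nu (actC a b c nu v) i - actB a b c nu (actA a b c nu v) i = zeta a b c nu * v i"
proof -
  have nu: "nu = 2 * (nu/2)" using two by simp
  have key: "2 * (actA a b c nu (actD a b c nu v) i - actD a b c nu (actA a b c nu v) i + actA a b c nu (actC a b c nu v) i - actB a b c nu (actA a b c nu v) i) - 2 * (zeta a b c nu * v i) = 0"
  proof (cases i)
    case 0 show ?thesis unfolding 0 ex_a0[OF two] co_a0_2[OF two nu] co_a0_3[OF two nu] by simp
  next
    case (Suc j)
    show ?thesis
    proof (cases j)
      case 0 show ?thesis unfolding Suc 0 ex_a1[OF two] co_a1_1[OF two nu] co_a1_2[OF two nu] co_a1_3[OF two nu] by simp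
    next
      case (Suc k) show ?thesis unfolding \<open>i = Suc j\<close> Suc ex_ag[OF two] co_ag_0[OF two nu] co_ag_1[OF two nu] co_ag_2[OF two nu] co_ag_3[OF two nu] by simp
    qed
  qed
  show ?thesis by (rule two_cancel[OF key two])
qed

lemma beta_pt:
  fixes a b c nu :: "'a::field" assumes two: "(2::'a) \<noteq> 0"
  shows "actB a b c nu (actD a b c nu v) i - actD a b c nu (actB a b c nu v) i + actB a b c nu (actA a b c nu v) i - actC a b c nu (actB a b c nu v) i = zeta_s a b c nu * v i"
proof -
  have nu: "nu = 2 * (nu/2)" using two by simp
  have key: "2 * (actB a b c nu (actD a b c nu v) i - actD a b c nu (actB a b c nu v) i + actB a b c nu (actA a b c nu v) i - actC a b c nu (actB a b c nu v) i) - 2 * (zeta_s a b c nu * v i) = 0"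
  proof (cases i)
    case 0 show ?thesis unfolding 0 ex_b0[OF two] co_b0_2[OF two nu] co_b0_3[OF two nu] co_b0_4[OF two nu] by simp
  next
    case (Suc k) show ?thesis unfolding Suc ex_bg[OF two] co_bg_1[OF two nu] co_bg_2[OF two nu] co_bg_3[OF two nu] co_bg_4[OF two nu] by simp
  qed
  show ?thesis by (rule two_cancel[OF key two])
qed




abbreviation fA :: "'a::comm_ring_1 fa" where "fA \<equiv> fgen GA"
abbreviation fB :: "'a::comm_ring_1 fa" where "fB \<equiv> fgen GB"
abbreviation fC :: "'a::comm_ring_1 fa" where "fC \<equiv> fgen GC"
abbreviation fD :: "'a::comm_ring_1 fa" where "fD \<equiv> fgen GD"

definition falpha :: "'a::comm_ring_1 fa" where "falpha = (fA * fD - fD * fA) + fA * fC - fB * fA"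
definition fbeta :: "'a::comm_ring_1 fa" where "fbeta = (fB * fD - fD * fB) + fB * fA - fC * fB"
definition fgamma :: "'a::comm_ring_1 fa" where "fgamma = (fC * fD - fD * fC) + fC * fB - fA * fC"
definition fdelta :: "'a::comm_ring_1 fa" where "fdelta = fA + fB + fC"

lemmas rep_simps = plus_fa.rep_eq minus_fa.rep_eq times_fa.rep_eq fgen.rep_eq sc.rep_eq zero_fa.rep_eq
  one_fa.rep_eq uminus_fa.rep_eq

lemma Rep_falpha: "Rep_fa falpha = alpha_el"
  by (simp add: falpha_def alpha_el_def ncp_comm_def rep_simps)
lemma Rep_fbeta: "Rep_fa fbeta = beta_el"
  by (simp add: fbeta_def beta_el_def ncp_comm_def rep_simps)
lemma Rep_fgamma: "Rep_fa fgamma = gamma_el"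
  by (simp add: fgamma_def gamma_el_def ncp_comm_def rep_simps)
lemma Rep_fdelta: "Rep_fa fdelta = delta_el"
  by (simp add: fdelta_def delta_el_def rep_simps)

lemma fgamma_eq: "fgamma = (fdelta * fD - fD * fdelta) - falpha - (fbeta :: 'a::comm_ring_1 fa)"
  by (simp add: fgamma_def falpha_def fbeta_def fdelta_def algebra_simps)

lemma lin_diff: "lin T \<Longrightarrow> T (\<lambda>i. u i - v i) = (\<lambda>i. T u i - T v i)"
proof -
  assume l: "lin T"
  have e1: "(\<lambda>i. u i - v i) = (\<lambda>i. u i + (\<lambda>i. (-1) * v i) i)" by simp
  have e2: "T (\<lambda>i. u i + (\<lambda>i. (-1) * v i) i) = (\<lambda>i. T u i + T (\<lambda>i. (-1) * v i) i)"
    by (rule lin_add[OF l])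
  have e3: "T (\<lambda>i. (-1) * v i) = (\<lambda>i. (-1) * T v i)" by (rule lin_scal[OF l])
  show ?thesis unfolding e1 e2 e3 by simp
qed

lemma act_sc1: "act a b c nu (sc d) v = (\<lambda>i. d * v i)"
  using act_sc[of a b c nu d 1 v] by (simp add: act_one)

lemma act_fA: "act a b c nu fA v = actA a b c nu v" by (simp add: act_gen)
lemma act_fB: "act a b c nu fB v = actB a b c nu v" by (simp add: act_gen)
lemma act_fC: "act a b c nu fC v = actC a b c nu v" by (simp add: act_gen)
lemma act_fD: "act a b c nu fD v = actD a b c nu v" by (simp add: act_gen)

lemmas act_simps = act_add act_diff act_mult act_fA act_fB act_fC act_fD act_sc1 act_one act_zero

lemma act_falpha:
  fixes a b c nu :: "'a::field" assumes two: "(2::'a) \<noteq> 0"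
  shows "act a b c nu falpha v = (\<lambda>i. zeta a b c nu * v i)"
  unfolding falpha_def by (simp add: act_simps alpha_pt[OF two])

lemma act_fbeta:
  fixes a b c nu :: "'a::field" assumes two: "(2::'a) \<noteq> 0"
  shows "act a b c nu fbeta v = (\<lambda>i. zeta_s a b c nu * v i)"
  unfolding fbeta_def by (simp add: act_simps beta_pt[OF two])

lemma act_fdelta: "act a b c nu fdelta v = (\<lambda>i. eta a b c nu * v i)"
  unfolding fdelta_def by (simp add: act_simps actC_def)

lemma act_central:
  assumes "\<And>u. act a b c nu z u = (\<lambda>i. k * u i)"
  shows "act a b c nu (z * X - X * z) v = (\<lambda>i. 0)"
  by (simp add: act_diff act_mult assms lin_scal[OF act_vlin])

lemma act_fgamma:
  fixes a b c nu :: "'a::field" assumes two: "(2::'a) \<noteq> 0"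
  shows "act a b c nu fgamma v = (\<lambda>i. (- zeta a b c nu - zeta_s a b c nu) * v i)"
proof -
  have h0: "act a b c nu (fdelta * fD - fD * fdelta) v = (\<lambda>i. 0)"
    by (rule act_central[OF act_fdelta])
  have "act a b c nu fgamma v = (\<lambda>i. act a b c nu (fdelta * fD - fD * fdelta) v i
       - act a b c nu falpha v i - act a b c nu fbeta v i)"
    unfolding fgamma_eq by (simp only: act_diff)
  then show ?thesis unfolding h0 act_falpha[OF two] act_fbeta[OF two]
    by (simp add: algebra_simps)
qed

lemma actD_twice:
  fixes a b c nu :: "'a::field" assumes two: "(2::'a) \<noteq> 0"
  shows "actD a b c nu v i + actD a b c nu v i = actA a b c nu (actB a b c nu v) i - actB a b c nu (actA a b c nu v) i"
proof -
  have h: "y / 2 + y / 2 = y" for y :: 'a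
  proof -
    have "y / 2 + y / 2 = (y + y) / 2" by (rule add_divide_distrib[symmetric])
    also have "(y + y) / 2 = (2 * y) / 2" by (simp only: mult_2)
    also have "\<dots> = y" using two by simp
    finally show ?thesis .
  qed
  show ?thesis unfolding actD_def by (rule h)
qed




section \<open>Relations act trivially\<close>

lemma lin_actC_app:
  assumes l: "lin T"
  shows "T (actC a b c nu v) = (\<lambda>i. eta a b c nu * T v i - T (actA a b c nu v) i - T (actB a b c nu v) i)"
  unfolding actC_def
    lin_diff[OF l, of "\<lambda>j. eta a b c nu * v j - actA a b c nu v j" "actB a b c nu v"]
    lin_diff[OF l, of "\<lambda>j. eta a b c nu * v j" "actA a b c nu v"] lin_scal[OF l] ..

lemma actC_app: "actC a b c nu w i = eta a b c nu * w i - actA a b c nu w i - actB a b c nu w i"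
  by (simp add: actC_def)

lemma Rep_comm: "ncp_comm (Rep_fa x) (Rep_fa y) = Rep_fa (x * y - y * x)"
  by (simp add: ncp_comm_def rep_simps)

lemma rel_AB:
  fixes a b c nu :: "'a::field" assumes two: "(2::'a) \<noteq> 0"
  shows "act a b c nu (fA * fB - fB * fA - (fD + fD)) v = (\<lambda>i. 0)"
  by (simp add: act_simps actD_twice[OF two])

lemma rel_BC:
  fixes a b c nu :: "'a::field" assumes two: "(2::'a) \<noteq> 0"
  shows "act a b c nu (fB * fC - fC * fB - (fD + fD)) v = (\<lambda>i. 0)"
  by (simp add: act_simps actD_twice[OF two] lin_actC_app[OF lin_actB] actC_app)

lemma rel_CA:
  fixes a b c nu :: "'a::field" assumes two: "(2::'a) \<noteq> 0"
  shows "act a b c nu (fC * fA - fA * fC - (fD + fD)) v = (\<lambda>i. 0)"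
  by (simp add: act_simps actD_twice[OF two] lin_actC_app[OF lin_actA] actC_app)

lemma central_elt:
  fixes a b c nu :: "'a::field" assumes two: "(2::'a) \<noteq> 0"
    and z: "z \<in> {alpha_el, beta_el, gamma_el}"
  shows "\<exists>z'. z = Rep_fa z' \<and> (\<exists>k. \<forall>u. act a b c nu z' u = (\<lambda>i. k * u i))"
proof -
  from z consider "z = alpha_el" | "z = beta_el" | "z = gamma_el" by auto
  then show ?thesis
  proof cases
    case 1 show ?thesis
      by (intro exI[of _ falpha] conjI exI[of _ "zeta a b c nu"] allI) (simp_all add: 1 Rep_falpha act_falpha[OF two])
  next
    case 2 show ?thesis
      by (intro exI[of _ fbeta] conjI exI[of _ "zeta_s a b c nu"] allI) (simp_all add: 2 Rep_fbeta act_fbeta[OF two])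
  next
    case 3 show ?thesis
      by (intro exI[of _ fgamma] conjI exI[of _ "- zeta a b c nu - zeta_s a b c nu"] allI)
        (simp_all add: 3 Rep_fgamma act_fgamma[OF two])
  qed
qed

lemma gen_elt: "X \<in> {rA, rB, rC, rD} \<Longrightarrow> \<exists>X'. X = Rep_fa X'"
  by (auto simp: fgen.rep_eq[symmetric])

lemma rels_act:
  fixes a b c nu :: "'a::field" assumes two: "(2::'a) \<noteq> 0"
    and s: "s \<in> (racah_rels :: 'a ncp set)"
  shows "\<exists>x. s = Rep_fa x \<and> (\<forall>v. act a b c nu x v = (\<lambda>i. 0))"
proof -
  from s consider "s = ncp_comm rA rB - (rD + rD)" | "s = ncp_comm rB rC - (rD + rD)"
    | "s = ncp_comm rC rA - (rD + rD)"
    | "\<exists>z X. s = ncp_comm z X \<and> z \<in> {alpha_el, beta_el, gamma_el} \<and> X \<in> {rA, rB, rC, rD}"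
    unfolding racah_rels_def by blast
  then show ?thesis
  proof cases
    case 1 show ?thesis
      by (intro exI[of _ "fA * fB - fB * fA - (fD + fD)"] conjI allI rel_AB[OF two])
        (simp add: 1 ncp_comm_def rep_simps)
  next
    case 2 show ?thesis
      by (intro exI[of _ "fB * fC - fC * fB - (fD + fD)"] conjI allI rel_BC[OF two])
        (simp add: 2 ncp_comm_def rep_simps)
  next
    case 3 show ?thesis
      by (intro exI[of _ "fC * fA - fA * fC - (fD + fD)"] conjI allI rel_CA[OF two])
        (simp add: 3 ncp_comm_def rep_simps)
  next
    case 4
    then obtain z X where sz: "s = ncp_comm z X" and z: "z \<in> {alpha_el, beta_el, gamma_el}"
      and X: "X \<in> {rA, rB, rC, rD}" by blast
    obtain z' k where z': "z = Rep_fa z'" and k: "\<And>u. act a b c nu z' u = (\<lambda>i. k * u i)"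
      using central_elt[OF two z] by blast
    obtain X' where X': "X = Rep_fa X'" using gen_elt[OF X] by blast
    show ?thesis
      by (intro exI[of _ "z' * X' - X' * z'"] conjI allI act_central[OF k])
        (simp add: sz z' X' Rep_comm)
  qed
qed

lemma racah_act:
  fixes a b c nu :: "'a::field" assumes two: "(2::'a) \<noteq> 0"
    and s: "s \<in> two_sided_ideal (racah_rels :: 'a ncp set)"
  shows "\<exists>x. s = Rep_fa x \<and> (\<forall>v. act a b c nu x v = (\<lambda>i. 0))"
  using s
proof induction
  case zero show ?case
    by (intro exI[of _ 0] conjI allI) (simp_all add: zero_fa.rep_eq zero_fun_def act_zero)
next
  case (gen s) then show ?case by (rule rels_act[OF two])
next
  case (add x y)
  then obtain x' y' where "x = Rep_fa x'" "\<forall>v. act a b c nu x' v = (\<lambda>i. 0)"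
    "y = Rep_fa y'" "\<forall>v. act a b c nu y' v = (\<lambda>i. 0)" by blast
  then show ?case
    by (intro exI[of _ "x' + y'"] conjI allI) (simp_all add: plus_fa.rep_eq act_add)
next
  case (mul x p q)
  then obtain x' where x': "x = Rep_fa x'" "\<forall>v. act a b c nu x' v = (\<lambda>i. 0)" by blast
  show ?case
    by (intro exI[of _ "Abs_fa p * (x' * Abs_fa q)"] conjI allI)
      (simp_all add: times_fa.rep_eq Abs_fa_inverse mul.hyps x' act_mult act_vzero)
qed

section \<open>The generators of I act trivially on m0\<close>

lemma igen2:
  fixes a b c nu :: "'a::field"
  shows "act a b c nu ((fB - sc (theta b nu 1)) * (fA - sc (theta a nu 0)) - sc (phi a b c nu 1)) m0 = (\<lambda>i. 0)"
proof (rule ext)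
  fix i
  show "act a b c nu ((fB - sc (theta b nu 1)) * (fA - sc (theta a nu 0)) - sc (phi a b c nu 1)) m0 i = 0"
  proof (cases i)
    case 0 then show ?thesis by (simp add: act_simps actA_def actB_def m0_def)
  next
    case (Suc j) then show ?thesis by (cases j) (simp_all add: act_simps actA_def actB_def m0_def)
  qed
qed

lemma igens_act:
  fixes a b c nu :: "'a::field" assumes two: "(2::'a) \<noteq> 0"
    and s: "s \<in> I_gens a b c nu"
  shows "\<exists>x. s = Rep_fa x \<and> act a b c nu x m0 = (\<lambda>i. 0)"
proof -
  from s consider "s = rB - ncp_const (theta b nu 0)"
    | "s = ncp_mul (rB - ncp_const (theta b nu 1)) (rA - ncp_const (theta a nu 0)) - ncp_const (phi a b c nu 1)"
    | "s = alpha_el - ncp_const (zeta a b c nu)" | "s = beta_el - ncp_const (zeta_s a b c nu)"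
    | "s = delta_el - ncp_const (eta a b c nu)"
    unfolding I_gens_def by blast
  then show ?thesis
  proof cases
    case 1 show ?thesis
      by (intro exI[of _ "fB - sc (theta b nu 0)"] conjI)
        (simp_all add: 1 rep_simps act_simps actB_def m0_def fun_eq_iff)
  next
    case 2 show ?thesis
      by (intro exI[of _ "(fB - sc (theta b nu 1)) * (fA - sc (theta a nu 0)) - sc (phi a b c nu 1)"] conjI igen2)
        (simp add: 2 rep_simps)
  next
    case 3 show ?thesis
      by (intro exI[of _ "falpha - sc (zeta a b c nu)"] conjI)
        (simp_all add: 3 rep_simps Rep_falpha act_diff act_sc1 act_falpha[OF two])
  next
    case 4 show ?thesis
      by (intro exI[of _ "fbeta - sc (zeta_s a b c nu)"] conjI)
        (simp_all add: 4 rep_simps Rep_fbeta act_diff act_sc1 act_fbeta[OF two])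
  next
    case 5 show ?thesis
      by (intro exI[of _ "fdelta - sc (eta a b c nu)"] conjI)
        (simp_all add: 5 rep_simps Rep_fdelta act_diff act_sc1 act_fdelta)
  qed
qed

lemma ilift_act:
  fixes a b c nu :: "'a::field" assumes two: "(2::'a) \<noteq> 0"
    and s: "s \<in> I_lift a b c nu"
  shows "\<exists>x. s = Rep_fa x \<and> act a b c nu x m0 = (\<lambda>i. 0)"
  using s unfolding I_lift_def
proof induction
  case zero show ?case
    by (intro exI[of _ 0] conjI) (simp_all add: zero_fa.rep_eq zero_fun_def act_zero)
next
  case (gen s)
  then show ?case
  proof
    assume "s \<in> racah_ideal"
    then obtain x where "s = Rep_fa x" "\<forall>v. act a b c nu x v = (\<lambda>i. 0)"
      using racah_act[OF two] unfolding racah_ideal_def by blast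
    then show ?thesis by blast
  next
    assume "s \<in> I_gens a b c nu" then show ?thesis by (rule igens_act[OF two])
  qed
next
  case (add x y)
  then obtain x' y' where "x = Rep_fa x'" "act a b c nu x' m0 = (\<lambda>i. 0)"
    "y = Rep_fa y'" "act a b c nu y' m0 = (\<lambda>i. 0)" by blast
  then show ?case
    by (intro exI[of _ "x' + y'"] conjI) (simp_all add: plus_fa.rep_eq act_add)
next
  case (mul x p)
  then obtain x' where x': "x = Rep_fa x'" "act a b c nu x' m0 = (\<lambda>i. 0)" by blast
  show ?case
    by (intro exI[of _ "Abs_fa p * x'"] conjI)
      (simp_all add: times_fa.rep_eq Abs_fa_inverse mul.hyps x' act_mult act_vzero)
qed




definition JJ :: "'a::field \<Rightarrow> 'a \<Rightarrow> 'a \<Rightarrow> 'a \<Rightarrow> 'a fa set" where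
  "JJ a b c nu = {x. Rep_fa x \<in> I_lift a b c nu}"
definition RR :: "'a::comm_ring_1 fa set" where
  "RR = {x. Rep_fa x \<in> racah_ideal}"

lemma Rep_fa_zero: "Rep_fa 0 = 0"
  by (simp add: zero_fa.rep_eq zero_fun_def)

lemma Rep_fa_plus: "Rep_fa (x + y) = Rep_fa x + Rep_fa y"
  by (simp add: plus_fa.rep_eq)

lemma JJ_zero: "0 \<in> JJ a b c nu"
  by (simp add: JJ_def Rep_fa_zero I_lift_def left_ideal.zero)

lemma JJ_add: "x \<in> JJ a b c nu \<Longrightarrow> y \<in> JJ a b c nu \<Longrightarrow> x + y \<in> JJ a b c nu"
  by (simp add: JJ_def Rep_fa_plus I_lift_def left_ideal.add)

lemma JJ_left: "x \<in> JJ a b c nu \<Longrightarrow> p * x \<in> JJ a b c nu"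
  by (simp add: JJ_def times_fa.rep_eq I_lift_def left_ideal.mul Rep_fa)

lemma JJ_neg: "x \<in> JJ a b c nu \<Longrightarrow> - x \<in> JJ a b c nu"
proof -
  assume "x \<in> JJ a b c nu"
  then have "sc (-1) * x \<in> JJ a b c nu" by (rule JJ_left)
  then show ?thesis by (simp add: sc_minus sc_one)
qed

lemma JJ_diff: "x \<in> JJ a b c nu \<Longrightarrow> y \<in> JJ a b c nu \<Longrightarrow> x - y \<in> JJ a b c nu"
  by (simp only: diff_conv_add_uminus JJ_add JJ_neg)

lemma RR_JJ: "x \<in> RR \<Longrightarrow> x \<in> JJ a b c nu"
  by (simp add: JJ_def RR_def I_lift_def left_ideal.gen)

lemma RR_zero: "0 \<in> RR"
  by (simp add: RR_def racah_ideal_def Rep_fa_zero two_sided_ideal.zero)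

lemma RR_add: "x \<in> RR \<Longrightarrow> y \<in> RR \<Longrightarrow> x + y \<in> RR"
  by (simp add: RR_def racah_ideal_def Rep_fa_plus two_sided_ideal.add)

lemma RR_mul: "x \<in> RR \<Longrightarrow> p * (x * q) \<in> RR"
  by (simp add: RR_def racah_ideal_def times_fa.rep_eq two_sided_ideal.mul Rep_fa)

lemma RR_left: "x \<in> RR \<Longrightarrow> p * x \<in> RR"
  using RR_mul[of x p 1] by simp

lemma RR_right: "x \<in> RR \<Longrightarrow> x * q \<in> RR"
  using RR_mul[of x 1 q] by simp

lemma RR_neg: "x \<in> RR \<Longrightarrow> - x \<in> RR"
proof -
  assume "x \<in> RR"
  then have "sc (-1) * x \<in> RR" by (rule RR_left)
  then show ?thesis by (simp add: sc_minus sc_one)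
qed

lemma RR_diff: "x \<in> RR \<Longrightarrow> y \<in> RR \<Longrightarrow> x - y \<in> RR"
  by (simp only: diff_conv_add_uminus RR_add RR_neg)

lemma RR_rel: "Rep_fa x \<in> racah_rels \<Longrightarrow> x \<in> RR"
  by (simp add: RR_def racah_ideal_def two_sided_ideal.gen)

definition RAB :: "'a::comm_ring_1 fa" where "RAB = fA * fB - fB * fA - (fD + fD)"

lemma RR_AB: "RAB \<in> RR"
  by (rule RR_rel) (simp add: RAB_def racah_rels_def ncp_comm_def rep_simps)

lemma RR_CA: "fC * fA - fA * fC - (fD + fD) \<in> RR"
  by (rule RR_rel) (simp add: racah_rels_def ncp_comm_def rep_simps)

lemma RR_alphaA: "falpha * fA - fA * falpha \<in> RR"
proof (rule RR_rel)
  have "Rep_fa (falpha * fA - fA * falpha) = ncp_comm alpha_el rA"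
    by (simp add: Rep_comm[symmetric] Rep_falpha fgen.rep_eq)
  then show "Rep_fa (falpha * fA - fA * falpha) \<in> racah_rels"
    unfolding racah_rels_def by blast
qed

lemma RR_deltaA: "fdelta * fA - fA * fdelta \<in> RR"
proof -
  have eq: "fdelta * fA - fA * fdelta = (fC * fA - fA * fC - (fD + fD)) - RAB"
    by (simp add: fdelta_def RAB_def algebra_simps)
  show ?thesis unfolding eq by (rule RR_diff[OF RR_CA RR_AB])
qed

lemma JJ_gen: "Rep_fa x \<in> I_gens a b c nu \<Longrightarrow> x \<in> JJ a b c nu"
  by (simp add: JJ_def I_lift_def left_ideal.gen)

lemma JJ_g1: "fB - sc (theta b nu 0) \<in> JJ a b c nu"
  by (rule JJ_gen) (simp add: I_gens_def rep_simps)

lemma JJ_g2: "(fB - sc (theta b nu 1)) * (fA - sc (theta a nu 0)) - sc (phi a b c nu 1) \<in> JJ a b c nu"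
  by (rule JJ_gen) (simp add: I_gens_def rep_simps)

lemma JJ_alpha: "falpha - sc (zeta a b c nu) \<in> JJ a b c nu"
  by (rule JJ_gen) (simp add: I_gens_def rep_simps Rep_falpha)

lemma JJ_delta: "fdelta - sc (eta a b c nu) \<in> JJ a b c nu"
  by (rule JJ_gen) (simp add: I_gens_def rep_simps Rep_fdelta)

lemma JJ_act:
  fixes a b c nu :: "'a::field" assumes two: "(2::'a) \<noteq> 0"
  shows "x \<in> JJ a b c nu \<Longrightarrow> act a b c nu x m0 = (\<lambda>i. 0)"
proof -
  assume "x \<in> JJ a b c nu"
  then obtain x' where "Rep_fa x = Rep_fa x'" "act a b c nu x' m0 = (\<lambda>i. 0)"
    using ilift_act[OF two] unfolding JJ_def by blast
  then show ?thesis by (simp add: Rep_fa_inject)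
qed

lemma comm_pow: "z * fA - fA * z \<in> RR \<Longrightarrow> z * fA ^ n - fA ^ n * z \<in> RR"
proof (induction n)
  case 0 then show ?case by (simp add: RR_zero)
next
  case (Suc n)
  have "z * fA ^ Suc n - fA ^ Suc n * z = (z * fA - fA * z) * fA ^ n + fA * (z * fA ^ n - fA ^ n * z)"
    by (simp add: algebra_simps)
  then show ?case using Suc RR_add RR_right RR_left by metis
qed

lemma central_pow:
  assumes "z * fA - fA * z \<in> RR" "z - sc k \<in> JJ a b c nu"
  shows "z * fA ^ n - sc k * fA ^ n \<in> JJ a b c nu"
proof -
  have "z * fA ^ n - sc k * fA ^ n = (z * fA ^ n - fA ^ n * z) + fA ^ n * (z - sc k)"
    by (simp add: algebra_simps sc_comm)
  then show ?thesis using RR_JJ[OF comm_pow[OF assms(1)]] JJ_left[OF assms(2)] JJ_add by metis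
qed

inductive_set lc :: "(nat \<Rightarrow> 'a::comm_ring_1 fa) \<Rightarrow> 'a fa set" for Bs where
  lc_zero: "0 \<in> lc Bs"
| lc_step: "s \<in> lc Bs \<Longrightarrow> s + sc d * Bs j \<in> lc Bs"

lemma lc_add: "t \<in> lc Bs \<Longrightarrow> s \<in> lc Bs \<Longrightarrow> s + t \<in> lc Bs"
proof (induction rule: lc.induct)
  case lc_zero then show ?case by simp
next
  case (lc_step t d j)
  then have "(s + t) + sc d * Bs j \<in> lc Bs" by (simp add: lc.lc_step)
  then show ?case by (simp add: add.assoc)
qed

lemma lc_sc: "s \<in> lc Bs \<Longrightarrow> sc e * s \<in> lc Bs"
proof (induction rule: lc.induct)
  case lc_zero then show ?case by (simp add: lc.lc_zero)
next
  case (lc_step s d j)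
  have "sc e * (s + sc d * Bs j) = sc e * s + sc (e * d) * Bs j"
    by (simp add: distrib_left sc_mult mult.assoc)
  then show ?case using lc_step lc.lc_step by metis
qed

lemma lc_gen: "sc d * Bs j \<in> lc Bs"
  using lc.lc_step[OF lc.lc_zero, of d Bs j] by simp

definition spanJ :: "'a::field \<Rightarrow> 'a \<Rightarrow> 'a \<Rightarrow> 'a \<Rightarrow> (nat \<Rightarrow> 'a fa) \<Rightarrow> 'a fa set" where
  "spanJ a b c nu Bs = {x. \<exists>s\<in>lc Bs. x - s \<in> JJ a b c nu}"

lemma sp_lc: "s \<in> lc Bs \<Longrightarrow> s \<in> spanJ a b c nu Bs"
  unfolding spanJ_def using JJ_zero by force

lemma sp_gen: "Bs j \<in> spanJ a b c nu Bs"
  using sp_lc[OF lc_gen[of 1 Bs j]] by (simp add: sc_one)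

lemma sp_zero: "0 \<in> spanJ a b c nu Bs"
  by (rule sp_lc[OF lc.lc_zero])

lemma sp_add: "x \<in> spanJ a b c nu Bs \<Longrightarrow> y \<in> spanJ a b c nu Bs \<Longrightarrow> x + y \<in> spanJ a b c nu Bs"
proof -
  assume "x \<in> spanJ a b c nu Bs" "y \<in> spanJ a b c nu Bs"
  then obtain s t where st: "s \<in> lc Bs" "t \<in> lc Bs" "x - s \<in> JJ a b c nu" "y - t \<in> JJ a b c nu"
    unfolding spanJ_def by blast
  have eq: "x + y - (s + t) = (x - s) + (y - t)" by simp
  have "x + y - (s + t) \<in> JJ a b c nu" unfolding eq by (rule JJ_add[OF st(3,4)])
  then show ?thesis unfolding spanJ_def using lc_add[OF st(2,1)] by blast
qed

lemma sp_sc: "x \<in> spanJ a b c nu Bs \<Longrightarrow> sc e * x \<in> spanJ a b c nu Bs"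
proof -
  assume "x \<in> spanJ a b c nu Bs"
  then obtain s where s: "s \<in> lc Bs" "x - s \<in> JJ a b c nu" unfolding spanJ_def by blast
  have "sc e * x - sc e * s = sc e * (x - s)" by (simp add: right_diff_distrib)
  then have "sc e * x - sc e * s \<in> JJ a b c nu" using JJ_left[OF s(2)] by simp
  then show ?thesis unfolding spanJ_def using lc_sc[OF s(1)] by blast
qed

lemma sp_JJ: "x \<in> spanJ a b c nu Bs \<Longrightarrow> k \<in> JJ a b c nu \<Longrightarrow> x + k \<in> spanJ a b c nu Bs"
proof -
  assume "x \<in> spanJ a b c nu Bs" "k \<in> JJ a b c nu"
  then obtain s where s: "s \<in> lc Bs" "x - s \<in> JJ a b c nu" unfolding spanJ_def by blast
  have eq: "x + k - s = (x - s) + k" by simp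
  have "x + k - s \<in> JJ a b c nu" unfolding eq by (rule JJ_add[OF s(2) \<open>k \<in> _\<close>])
  then show ?thesis unfolding spanJ_def using s(1) by blast
qed

lemma sp_cong: "x - y \<in> JJ a b c nu \<Longrightarrow> y \<in> spanJ a b c nu Bs \<Longrightarrow> x \<in> spanJ a b c nu Bs"
  using sp_JJ[of y a b c nu Bs "x - y"] by simp

lemma sp_neg: "x \<in> spanJ a b c nu Bs \<Longrightarrow> - x \<in> spanJ a b c nu Bs"
  using sp_sc[of x a b c nu Bs "-1"] by (simp add: sc_minus sc_one)

lemma sp_diff: "x \<in> spanJ a b c nu Bs \<Longrightarrow> y \<in> spanJ a b c nu Bs \<Longrightarrow> x - y \<in> spanJ a b c nu Bs"
  by (simp only: diff_conv_add_uminus sp_add sp_neg)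

lemma sp_left:
  assumes h: "\<And>j. y * Bs j \<in> spanJ a b c nu Bs'"
    and x: "x \<in> spanJ a b c nu Bs"
  shows "y * x \<in> spanJ a b c nu Bs'"
proof -
  obtain s where s: "s \<in> lc Bs" "x - s \<in> JJ a b c nu" using x unfolding spanJ_def by blast
  have ys: "y * s \<in> spanJ a b c nu Bs'" using s(1)
  proof (induction rule: lc.induct)
    case lc_zero then show ?case by (simp add: sp_zero)
  next
    case (lc_step s d j)
    have "y * (s + sc d * Bs j) = y * s + sc d * (y * Bs j)"
      by (simp add: distrib_left sc_mult_assoc_comm)
    then show ?case using sp_add[OF lc_step.IH sp_sc[OF h]] by simp
  qed
  have "y * x = y * s + y * (x - s)" by (simp add: right_diff_distrib)
  then show ?thesis using sp_JJ[OF ys JJ_left[OF s(2)]] by simp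
qed




section \<open>Spanning\<close>

primrec pA :: "'a::field \<Rightarrow> 'a \<Rightarrow> nat \<Rightarrow> 'a fa" where
  "pA a nu 0 = 1"
| "pA a nu (Suc j) = (fA - sc (theta a nu j)) * pA a nu j"

context
  fixes a b c nu :: "'a::field"
  assumes two: "(2::'a) \<noteq> 0"
begin

abbreviation SP :: "'a fa set" where "SP \<equiv> spanJ a b c nu (\<lambda>j. fA ^ j)"

lemma spA: "x \<in> SP \<Longrightarrow> fA * x \<in> SP"
proof (rule sp_left[where Bs="\<lambda>j. fA ^ j"])
  fix j show "fA * fA ^ j \<in> SP" using sp_gen[of "\<lambda>j. fA ^ j" "Suc j" a b c nu] by simp
qed

lemma sp_Ap: "fA ^ n \<in> SP"
  using sp_gen[of "\<lambda>j. fA ^ j" n a b c nu] by simp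

lemma sp_central:
  assumes "z * fA - fA * z \<in> RR" "z - sc k \<in> JJ a b c nu"
  shows "z * fA ^ n \<in> SP"
  by (rule sp_cong[OF central_pow[OF assms] sp_sc[OF sp_Ap]])

lemma B0: "fB \<in> SP"
proof -
  have "fB - sc (theta b nu 0) * fA ^ 0 \<in> JJ a b c nu" using JJ_g1 by simp
  then show ?thesis by (rule sp_cong) (rule sp_sc[OF sp_Ap])
qed

lemma B1: "fB * fA \<in> SP"
proof -
  let ?s1 = "theta b nu 1" and ?t0 = "theta a nu 0" and ?p1 = "phi a b c nu 1"
  let ?Y = "sc ?t0 * fB + sc ?s1 * fA ^ 1 - sc (?s1 * ?t0) * fA ^ 0 + sc ?p1 * fA ^ 0"
  have eq: "fB * fA - ?Y = (fB - sc ?s1) * (fA - sc ?t0) - sc ?p1"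
    by (simp add: algebra_simps sc_mult sc_comm[of ?t0 fB]) (simp only: sc_mult[symmetric] mult.commute)
  have "fB * fA - ?Y \<in> JJ a b c nu" unfolding eq by (rule JJ_g2)
  moreover have "?Y \<in> SP"
    by (intro sp_add sp_diff sp_sc B0 sp_Ap)
  ultimately show ?thesis by (rule sp_cong)
qed

lemma Brec:
  assumes IH0: "fB * fA ^ n \<in> SP" and IH1: "fB * fA ^ Suc n \<in> SP"
  shows "fB * fA ^ Suc (Suc n) \<in> SP"
proof -
  let ?P = "fA ^ n :: 'a fa"
  let ?S = "(falpha * ?P + falpha * ?P) - fA * (fA * (fB * ?P))
     + (fA * (fB * (fA * ?P)) + fA * (fB * (fA * ?P)))
     - (fA * (fdelta * ?P) + fA * (fdelta * ?P)) + (fA * (fA * ?P) + fA * (fA * ?P))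
     + (fA * (fB * ?P) + fA * (fB * ?P)) + (fB * (fA * ?P) + fB * (fA * ?P))"
  have RI: "fB * (fA * (fA * ?P)) = ?S + (fA * (RAB * ?P) - RAB * (fA * ?P))"
    by (simp add: falpha_def fdelta_def RAB_def algebra_simps)
  have h1: "fA * ?P \<in> SP" by (rule spA[OF sp_Ap])
  have h2: "fB * (fA * ?P) \<in> SP" using IH1 by simp
  have Sin: "?S \<in> SP"
    by (intro sp_add sp_diff spA IH0 h1 h2 sp_central[OF RR_alphaA JJ_alpha] sp_central[OF RR_deltaA JJ_delta])
  have k: "fA * (RAB * ?P) - RAB * (fA * ?P) \<in> JJ a b c nu"
    by (intro RR_JJ RR_diff RR_left RR_right RR_AB)
  show ?thesis using sp_JJ[OF Sin k] RI by simp
qed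

lemma B_all: "fB * fA ^ n \<in> SP"
proof -
  have "fB * fA ^ n \<in> SP \<and> fB * fA ^ Suc n \<in> SP"
  proof (induction n)
    case 0 show ?case using B0 B1 by simp
  next
    case (Suc n) then show ?case using Brec by blast
  qed
  then show ?thesis by blast
qed

lemma C_all: "fC * fA ^ n \<in> SP"
proof -
  have eq: "fC * fA ^ n = fdelta * fA ^ n - fA * fA ^ n - fB * fA ^ n"
    by (simp add: fdelta_def algebra_simps)
  show ?thesis unfolding eq
    by (intro sp_diff sp_central[OF RR_deltaA JJ_delta] spA sp_Ap B_all)
qed

lemma D_all: "fD * fA ^ n \<in> SP"
proof -
  let ?P = "fA ^ n :: 'a fa"
  have eq1: "(fD + fD) * ?P - (fA * (fB * ?P) - fB * (fA * ?P)) = - (RAB * ?P)"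
    by (simp add: RAB_def algebra_simps)
  have "(fD + fD) * ?P \<in> SP"
  proof (rule sp_cong)
    show "(fD + fD) * ?P - (fA * (fB * ?P) - fB * (fA * ?P)) \<in> JJ a b c nu"
      unfolding eq1 by (intro JJ_neg RR_JJ RR_right RR_AB)
    show "fA * (fB * ?P) - fB * (fA * ?P) \<in> SP"
      using B_all[of "Suc n"] by (intro sp_diff spA B_all) simp_all
  qed
  then have "sc (1/2) * ((fD + fD) * ?P) \<in> SP" by (rule sp_sc)
  moreover have "sc (1/2) * ((fD + fD) * ?P) = fD * ?P"
  proof -
    have h: "(1/2 + 1/2 :: 'a) = 1" using two by (simp add: add_divide_distrib[symmetric])
    have "sc (1/2) * ((fD + fD) * ?P) = sc (1/2) * (fD * ?P) + sc (1/2) * (fD * ?P)"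
      by (simp only: distrib_left distrib_right)
    also have "\<dots> = sc (1/2 + 1/2) * (fD * ?P)" by (simp only: sc_add distrib_right)
    also have "\<dots> = fD * ?P" by (simp only: h sc_one mult_1_left)
    finally show ?thesis .
  qed
  ultimately show ?thesis by simp
qed

lemma gen_all: "fgen g * fA ^ n \<in> SP"
  by (cases g) (simp_all add: spA[OF sp_Ap, simplified] B_all C_all D_all)

lemma gen_span: "x \<in> SP \<Longrightarrow> fgen g * x \<in> SP"
  by (rule sp_left[OF gen_all])

lemma fword_span: "fword u \<in> SP"
proof (induction u)
  case Nil show ?case using sp_Ap[of 0] by (simp add: fword_Nil)
next
  case (Cons g u) then show ?case by (simp add: fword_Cons gen_span)
qed

lemma sum_span: "(\<And>u. u \<in> S \<Longrightarrow> f u \<in> spanJ a b c nu Bs) \<Longrightarrow> sum f S \<in> spanJ a b c nu Bs"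
proof (induction S rule: infinite_finite_induct)
  case (infinite S) then show ?case by (simp add: sp_zero)
next
  case empty then show ?case by (simp add: sp_zero)
next
  case (insert x F) then show ?case by (simp add: sp_add)
qed

lemma all_SP: "x \<in> SP"
  by (subst fa_repr) (intro sum_span sp_sc fword_span)

lemma A_pA: "fA * pA a nu j \<in> spanJ a b c nu (pA a nu)"
proof -
  have eq: "fA * pA a nu j = sc 1 * pA a nu (Suc j) + sc (theta a nu j) * pA a nu j"
    by (simp add: sc_one algebra_simps)
  show ?thesis unfolding eq by (intro sp_lc lc.lc_step[OF lc_gen])
qed

lemma Ap_pA: "fA ^ n \<in> spanJ a b c nu (pA a nu)"
proof (induction n)
  case 0 show ?case using sp_gen[of "pA a nu" 0 a b c nu] by simp
next
  case (Suc n)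
  have "fA * fA ^ n \<in> spanJ a b c nu (pA a nu)" by (rule sp_left[OF A_pA Suc])
  then show ?case by simp
qed

lemma all_pA: "x \<in> spanJ a b c nu (pA a nu)"
proof -
  have "1 * x \<in> spanJ a b c nu (pA a nu)" by (rule sp_left[OF _ all_SP]) (simp add: Ap_pA)
  then show ?thesis by simp
qed

end




section \<open>Normal forms\<close>

lemma sum_ext:
  fixes N K :: nat
  assumes "\<forall>j\<ge>N. cf j = 0" "N \<le> K"
  shows "(\<Sum>j<K. sc (cf j) * Bs j) = (\<Sum>j<N. sc (cf j) * Bs j)"
proof (rule sum.mono_neutral_right)
  show "finite {..<K}" by simp
  show "{..<N} \<subseteq> {..<K}" using assms(2) by auto
  show "\<forall>i\<in>{..<K} - {..<N}. sc (cf i) * Bs i = 0" using assms(1) by (simp add: sc_zero)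
qed

lemma lc_nf: "s \<in> lc Bs \<Longrightarrow> \<exists>N cf. (\<forall>j\<ge>N. cf j = 0) \<and> s = (\<Sum>j<N. sc (cf j) * Bs j)"
proof (induction rule: lc.induct)
  case lc_zero show ?case by (intro exI[of _ 0] exI[of _ "\<lambda>j. 0"]) simp
next
  case (lc_step s d k)
  then obtain N cf where cf: "\<forall>j\<ge>N. cf j = 0" and s: "s = (\<Sum>j<N. sc (cf j) * Bs j)" by blast
  define N' where "N' = max N (Suc k)"
  define cf' where "cf' = (\<lambda>j. cf j + (if j = k then d else 0))"
  have cf': "\<forall>j\<ge>N'. cf' j = 0" using cf by (auto simp: cf'_def N'_def)
  have s': "s = (\<Sum>j<N'. sc (cf j) * Bs j)" unfolding s using sum_ext[OF cf, of N' Bs] by (simp add: N'_def)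
  have "(\<Sum>j<N'. sc (cf' j) * Bs j) = (\<Sum>j<N'. sc (cf j) * Bs j + (if j = k then sc d * Bs j else 0))"
    by (intro sum.cong refl) (simp add: cf'_def sc_add distrib_right sc_zero)
  also have "\<dots> = (\<Sum>j<N'. sc (cf j) * Bs j) + sc d * Bs k"
    by (simp add: sum.distrib N'_def less_max_iff_disj)
  also have "\<dots> = s + sc d * Bs k" using s' by simp
  finally show ?case using cf' by metis
qed

context
  fixes a b c nu :: "'a::field"
  assumes two: "(2::'a) \<noteq> 0"
begin

lemma act_pA: "act a b c nu (pA a nu j) m0 = (\<lambda>i. if i = j then 1 else 0)"
proof (induction j)
  case 0 show ?case by (simp add: act_one m0_def)
next
  case (Suc j)
  show ?case
  proof (rule ext)
    fix i
    show "act a b c nu (pA a nu (Suc j)) m0 i = (if i = Suc j then 1 else 0)"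
      by (simp add: act_simps actA_def Suc) (cases i, auto)
  qed
qed

lemma act_nf:
  assumes "\<forall>j\<ge>N. cf j = 0"
  shows "act a b c nu (\<Sum>j<N. sc (cf j) * pA a nu j) m0 = cf"
proof (rule ext)
  fix i
  have "act a b c nu (\<Sum>j<N. sc (cf j) * pA a nu j) m0 i = (\<Sum>j<N. if i = j then cf j else 0)"
    by (simp add: act_sum act_sc act_pA if_distrib cong: if_cong)
  also have "\<dots> = cf i" using assms by (cases "i < N") auto
  finally show "act a b c nu (\<Sum>j<N. sc (cf j) * pA a nu j) m0 i = cf i" .
qed

lemma nf_exists:
  "\<exists>N cf. (\<forall>j\<ge>N. cf j = 0) \<and> act a b c nu x m0 = cf \<and> x - (\<Sum>j<N. sc (cf j) * pA a nu j) \<in> JJ a b c nu"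
proof -
  obtain s where s: "s \<in> lc (pA a nu)" "x - s \<in> JJ a b c nu"
    using all_pA[OF two, where a=a and b=b and c=c and nu=nu and x=x] unfolding spanJ_def by blast
  obtain N cf where cf: "\<forall>j\<ge>N. cf j = 0" and se: "s = (\<Sum>j<N. sc (cf j) * pA a nu j)"
    using lc_nf[OF s(1)] by blast
  have "act a b c nu (x - s) m0 = (\<lambda>i. 0)" by (rule JJ_act[OF two s(2)])
  then have "act a b c nu x m0 = act a b c nu s m0"
    by (simp add: act_diff fun_eq_iff)
  also have "\<dots> = cf" unfolding se by (rule act_nf[OF cf])
  finally show ?thesis using cf s(2) se by blast
qed

lemma act_m0_Mv: "act a b c nu x m0 \<in> Mv"
proof -
  obtain N cf where "\<forall>j\<ge>N. cf j = 0" "act a b c nu x m0 = cf" using nf_exists by blast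
  then show ?thesis unfolding Mv_def
    by (auto intro: finite_subset[of _ "{..<N}"] simp: not_less[symmetric])
qed

lemma act_m0_inj:
  assumes "act a b c nu x m0 = act a b c nu y m0"
  shows "x - y \<in> JJ a b c nu"
proof -
  obtain N cf where cf: "\<forall>j\<ge>N. cf j = 0" "act a b c nu x m0 = cf"
      "x - (\<Sum>j<N. sc (cf j) * pA a nu j) \<in> JJ a b c nu" using nf_exists by blast
  obtain M cg where cg: "\<forall>j\<ge>M. cg j = 0" "act a b c nu y m0 = cg"
      "y - (\<Sum>j<M. sc (cg j) * pA a nu j) \<in> JJ a b c nu" using nf_exists by blast
  have e: "cf = cg" using cf(2) cg(2) assms by simp
  have "(\<Sum>j<N. sc (cf j) * pA a nu j) = (\<Sum>j<max N M. sc (cf j) * pA a nu j)"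
    using sum_ext[OF cf(1), of "max N M"] by simp
  also have "\<dots> = (\<Sum>j<M. sc (cg j) * pA a nu j)"
    using sum_ext[OF cg(1), of "max N M"] e by simp
  finally have st: "(\<Sum>j<N. sc (cf j) * pA a nu j) = (\<Sum>j<M. sc (cg j) * pA a nu j)" .
  have "x - y = (x - (\<Sum>j<N. sc (cf j) * pA a nu j)) - (y - (\<Sum>j<M. sc (cg j) * pA a nu j))"
    unfolding st by simp
  then show ?thesis using JJ_diff[OF cf(3) cg(3)] by simp
qed

lemma act_m0_surj:
  assumes "v \<in> Mv" shows "\<exists>x. act a b c nu x m0 = v"
proof -
  have "finite {i. v i \<noteq> 0}" using assms by (simp add: Mv_def)
  then obtain N where "\<forall>i\<in>{i. v i \<noteq> 0}. i < N" by (meson finite_nat_set_iff_bounded)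
  then have "\<forall>j\<ge>N. v j = 0" by (auto simp: not_less[symmetric])
  then show ?thesis using act_nf by blast
qed

lemma I_zero: "0 \<in> I_lift a b c nu"
  by (simp add: I_lift_def left_ideal.zero)

lemma I_add: "k \<in> I_lift a b c nu \<Longrightarrow> l \<in> I_lift a b c nu \<Longrightarrow> k + l \<in> I_lift a b c nu"
  by (simp add: I_lift_def left_ideal.add)

lemma I_mul: "k \<in> I_lift a b c nu \<Longrightarrow> r \<in> free_alg \<Longrightarrow> ncp_mul r k \<in> I_lift a b c nu"
  by (simp add: I_lift_def left_ideal.mul)

lemma rcoset_sub:
  assumes "x - y \<in> JJ a b c nu"
  shows "rcoset a b c nu (Rep_fa x) \<subseteq> rcoset a b c nu (Rep_fa y)"
proof
  fix p assume "p \<in> rcoset a b c nu (Rep_fa x)"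
  then obtain k where k: "k \<in> I_lift a b c nu" "p = Rep_fa x + k" unfolding rcoset_def by blast
  have "Rep_fa (x - y) \<in> I_lift a b c nu" using assms by (simp add: JJ_def)
  then have "Rep_fa (x - y) + k \<in> I_lift a b c nu" by (rule I_add[OF _ k(1)])
  moreover have "p = Rep_fa y + (Rep_fa (x - y) + k)"
    by (simp add: k(2) minus_fa.rep_eq fun_eq_iff)
  ultimately show "p \<in> rcoset a b c nu (Rep_fa y)" unfolding rcoset_def by blast
qed

lemma rcoset_eq_iff:
  "rcoset a b c nu (Rep_fa x) = rcoset a b c nu (Rep_fa y) \<longleftrightarrow> x - y \<in> JJ a b c nu"
proof
  assume eq: "rcoset a b c nu (Rep_fa x) = rcoset a b c nu (Rep_fa y)"
  have x0: "Rep_fa x = Rep_fa x + 0" by simp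
  have "Rep_fa x \<in> rcoset a b c nu (Rep_fa x)"
    unfolding rcoset_def mem_Collect_eq by (intro exI[of _ 0] conjI x0 I_zero)
  then have "Rep_fa x \<in> rcoset a b c nu (Rep_fa y)" by (simp only: eq)
  then have "\<exists>k. Rep_fa x = Rep_fa y + k \<and> k \<in> I_lift a b c nu"
    unfolding rcoset_def mem_Collect_eq .
  then obtain k where k: "k \<in> I_lift a b c nu" "Rep_fa x = Rep_fa y + k" by blast
  have "Rep_fa (x - y) = k" by (simp add: minus_fa.rep_eq k(2))
  then show "x - y \<in> JJ a b c nu" using k(1) by (simp add: JJ_def)
next
  assume xy: "x - y \<in> JJ a b c nu"
  have "- (x - y) \<in> JJ a b c nu" by (rule JJ_neg[OF xy])
  then have yx: "y - x \<in> JJ a b c nu" by simp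
  show "rcoset a b c nu (Rep_fa x) = rcoset a b c nu (Rep_fa y)"
    using rcoset_sub[OF xy] rcoset_sub[OF yx] by (rule equalityI)
qed

lemma rquot_eq: "rquot a b c nu = (\<lambda>x. rcoset a b c nu (Rep_fa x)) ` UNIV"
  unfolding rquot_def type_definition.Rep_range[OF type_definition_fa, symmetric] image_image ..

lemma qadd_eq:
  "qadd (rcoset a b c nu (Rep_fa x)) (rcoset a b c nu (Rep_fa y)) = rcoset a b c nu (Rep_fa (x + y))"
proof (intro equalityI subsetI)
  fix p assume "p \<in> qadd (rcoset a b c nu (Rep_fa x)) (rcoset a b c nu (Rep_fa y))"
  then obtain k l where kl: "k \<in> I_lift a b c nu" "l \<in> I_lift a b c nu"
    "p = (Rep_fa x + k) + (Rep_fa y + l)" unfolding qadd_def rcoset_def by blast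
  have "p = Rep_fa (x + y) + (k + l)" by (simp add: kl(3) plus_fa.rep_eq algebra_simps)
  then show "p \<in> rcoset a b c nu (Rep_fa (x + y))" unfolding rcoset_def using I_add[OF kl(1,2)] by blast
next
  fix p assume "p \<in> rcoset a b c nu (Rep_fa (x + y))"
  then obtain k where k: "k \<in> I_lift a b c nu" "p = Rep_fa (x + y) + k" unfolding rcoset_def by blast
  have "p = (Rep_fa x + k) + (Rep_fa y + 0)" by (simp add: k(2) plus_fa.rep_eq algebra_simps)
  moreover have "Rep_fa x + k \<in> rcoset a b c nu (Rep_fa x)" using k(1) unfolding rcoset_def by blast
  moreover have "Rep_fa y + 0 \<in> rcoset a b c nu (Rep_fa y)" using I_zero unfolding rcoset_def by blast
  ultimately show "p \<in> qadd (rcoset a b c nu (Rep_fa x)) (rcoset a b c nu (Rep_fa y))"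
    unfolding qadd_def by blast
qed

lemma ncp_mul_plus_right: "ncp_mul r (p + q) = ncp_mul r p + ncp_mul r q"
  by (simp add: fun_eq_iff ncp_mul_add_right')

lemma qact_eq:
  "qact a b c nu (Rep_fa r) (rcoset a b c nu (Rep_fa x)) = rcoset a b c nu (Rep_fa (r * x))"
proof (intro equalityI subsetI)
  fix p assume "p \<in> qact a b c nu (Rep_fa r) (rcoset a b c nu (Rep_fa x))"
  then obtain k l where kl: "k \<in> I_lift a b c nu" "l \<in> I_lift a b c nu"
    "p = ncp_mul (Rep_fa r) (Rep_fa x + k) + l" unfolding qact_def rcoset_def by blast
  have "p = Rep_fa (r * x) + (ncp_mul (Rep_fa r) k + l)"
    by (simp add: kl(3) times_fa.rep_eq ncp_mul_plus_right add.assoc)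
  moreover have "ncp_mul (Rep_fa r) k + l \<in> I_lift a b c nu"
    by (rule I_add[OF I_mul[OF kl(1) Rep_fa] kl(2)])
  ultimately show "p \<in> rcoset a b c nu (Rep_fa (r * x))" unfolding rcoset_def by blast
next
  fix p assume "p \<in> rcoset a b c nu (Rep_fa (r * x))"
  then obtain k where k: "k \<in> I_lift a b c nu" "p = Rep_fa (r * x) + k" unfolding rcoset_def by blast
  have "p = ncp_mul (Rep_fa r) (Rep_fa x + 0) + k" by (simp add: k(2) times_fa.rep_eq)
  moreover have "Rep_fa x + 0 \<in> rcoset a b c nu (Rep_fa x)" using I_zero unfolding rcoset_def by blast
  ultimately show "p \<in> qact a b c nu (Rep_fa r) (rcoset a b c nu (Rep_fa x))"
    unfolding qact_def using k(1) by blast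
qed

definition Phi :: "'a ncp set \<Rightarrow> nat \<Rightarrow> 'a" where
  "Phi X = act a b c nu (SOME x. X = rcoset a b c nu (Rep_fa x)) m0"

lemma Phi_eq: "Phi (rcoset a b c nu (Rep_fa x)) = act a b c nu x m0"
proof -
  let ?x = "SOME x'. rcoset a b c nu (Rep_fa x) = rcoset a b c nu (Rep_fa x')"
  have "rcoset a b c nu (Rep_fa x) = rcoset a b c nu (Rep_fa ?x)" by (rule someI) (rule refl)
  then have "x - ?x \<in> JJ a b c nu" by (simp add: rcoset_eq_iff)
  then have "act a b c nu (x - ?x) m0 = (\<lambda>i. 0)" by (rule JJ_act[OF two])
  then have "act a b c nu x m0 = act a b c nu ?x m0" by (simp add: act_diff fun_eq_iff)
  then show ?thesis unfolding Phi_def by simp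
qed

lemma main:
  "\<exists>\<Phi>. racah_hom a b c nu \<Phi>
              \<and> \<Phi> (rcoset a b c nu (ncp_const 1)) = m0
              \<and> bij_betw \<Phi> (rquot a b c nu) Mv
              \<and> (\<forall>\<Psi>. racah_hom a b c nu \<Psi> \<and> \<Psi> (rcoset a b c nu (ncp_const 1)) = m0
                      \<longrightarrow> (\<forall>X\<in>rquot a b c nu. \<Psi> X = \<Phi> X))"
proof (intro exI[of _ Phi] conjI allI impI ballI)
  have one: "rcoset a b c nu (ncp_const 1) = rcoset a b c nu (Rep_fa 1)" by (simp add: one_fa.rep_eq)
  show hom: "racah_hom a b c nu Phi"
    unfolding racah_hom_def rquot_eq
  proof (intro conjI ballI)
    fix X assume "X \<in> range (\<lambda>x. rcoset a b c nu (Rep_fa x))"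
    then obtain x where "X = rcoset a b c nu (Rep_fa x)" by blast
    then show "Phi X \<in> Mv" by (simp add: Phi_eq act_m0_Mv)
  next
    fix X Y assume "X \<in> range (\<lambda>x. rcoset a b c nu (Rep_fa x))" "Y \<in> range (\<lambda>x. rcoset a b c nu (Rep_fa x))"
    then obtain x y where "X = rcoset a b c nu (Rep_fa x)" "Y = rcoset a b c nu (Rep_fa y)" by blast
    then show "Phi (qadd X Y) = (\<lambda>i. Phi X i + Phi Y i)" by (simp add: qadd_eq Phi_eq act_add)
  next
    fix r :: "'a ncp" and X assume r: "r \<in> free_alg" and "X \<in> range (\<lambda>x. rcoset a b c nu (Rep_fa x))"
    then obtain x where X: "X = rcoset a b c nu (Rep_fa x)" by blast
    have r': "r = Rep_fa (Abs_fa r)" using r by (simp add: Abs_fa_inverse)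
    show "Phi (qact a b c nu r X) = mact a b c nu r (Phi X)"
      unfolding X by (subst (1 2) r') (simp add: qact_eq Phi_eq act_mult act_def[symmetric])
  qed
  show "Phi (rcoset a b c nu (ncp_const 1)) = m0" unfolding one by (simp add: Phi_eq act_one)
  show "bij_betw Phi (rquot a b c nu) Mv"
    unfolding bij_betw_def rquot_eq
  proof (intro conjI)
    show "inj_on Phi (range (\<lambda>x. rcoset a b c nu (Rep_fa x)))"
    proof (rule inj_onI)
      fix X Y assume "X \<in> range (\<lambda>x. rcoset a b c nu (Rep_fa x))" "Y \<in> range (\<lambda>x. rcoset a b c nu (Rep_fa x))"
        and e: "Phi X = Phi Y"
      then obtain x y where xy: "X = rcoset a b c nu (Rep_fa x)" "Y = rcoset a b c nu (Rep_fa y)" by blast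
      then have "act a b c nu x m0 = act a b c nu y m0" using e by (simp add: Phi_eq)
      then have "x - y \<in> JJ a b c nu" by (rule act_m0_inj)
      then show "X = Y" unfolding xy by (simp add: rcoset_eq_iff)
    qed
    show "Phi ` range (\<lambda>x. rcoset a b c nu (Rep_fa x)) = Mv"
    proof (intro equalityI subsetI)
      fix v :: "nat \<Rightarrow> 'a" assume "v \<in> Phi ` range (\<lambda>x. rcoset a b c nu (Rep_fa x))"
      then obtain x where "v = Phi (rcoset a b c nu (Rep_fa x))" by blast
      then show "v \<in> Mv" by (simp add: Phi_eq act_m0_Mv)
    next
      fix v :: "nat \<Rightarrow> 'a" assume "v \<in> Mv"
      then obtain x where "act a b c nu x m0 = v" using act_m0_surj by blast
      then have "v = Phi (rcoset a b c nu (Rep_fa x))" by (simp add: Phi_eq)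
      then show "v \<in> Phi ` range (\<lambda>x. rcoset a b c nu (Rep_fa x))" by blast
    qed
  qed
  fix Psi :: "'a ncp set \<Rightarrow> nat \<Rightarrow> 'a" and X :: "'a ncp set"
  assume H: "racah_hom a b c nu Psi \<and> Psi (rcoset a b c nu (ncp_const 1)) = m0"
    and X: "X \<in> rquot a b c nu"
  obtain x where Xx: "X = rcoset a b c nu (Rep_fa x)" using X unfolding rquot_eq by blast
  have Y: "rcoset a b c nu (Rep_fa 1) \<in> rquot a b c nu" unfolding rquot_eq by blast
  have "Psi (qact a b c nu (Rep_fa x) (rcoset a b c nu (Rep_fa 1)))
      = mact a b c nu (Rep_fa x) (Psi (rcoset a b c nu (Rep_fa 1)))"
    using H Y Rep_fa[of x] unfolding racah_hom_def by blast
  then have "Psi X = act a b c nu x m0"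
    using H unfolding one by (simp add: qact_eq Xx act_def)
  then show "Psi X = Phi X" by (simp add: Xx Phi_eq)
qed

end


theorem theorem3p6:
  fixes a b c nu :: "'a::field"
  assumes char_ne_2: "(2::'a) \<noteq> 0"
    and alg_closed: "\<forall>p::'a poly. 0 < degree p \<longrightarrow> (\<exists>x. poly p x = 0)"
  shows "\<exists>\<Phi>. racah_hom a b c nu \<Phi>
              \<and> \<Phi> (rcoset a b c nu (ncp_const 1)) = m0
              \<and> bij_betw \<Phi> (rquot a b c nu) Mv
              \<and> (\<forall>\<Psi>. racah_hom a b c nu \<Psi> \<and> \<Psi> (rcoset a b c nu (ncp_const 1)) = m0
                      \<longrightarrow> (\<forall>X\<in>rquot a b c nu. \<Psi> X = \<Phi> X))"
  by (rule main[OF char_ne_2])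

end
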